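(* Let $\varphi$ be an increasing concave function on $[0,\infty)$ with $\lim_{t\to0}\varphi(t)=0$ and let $1\le r<\infty$. Then the Lorentz space $\Lambda_r(\varphi)$ belongs to the class $\mathcal X$. In particular, $L(p,q)\in\mathcal X$ whenever $1<p<\infty$ and $1\le q\le p$.
   Context: All functions are measurable on $(0,\infty)$; $f^*$ denotes the nonincreasing rearrangement. A pair $(f,g)$ satisfies the NP condition if there is $t_0>0$ with $f^*(t)\ge g^*(t)$ for $t\le t_0$ and $f^*(t)\le g^*(t)$ for $t\ge t_0$. $\mathcal X$ is the class of all rearrangement invariant spaces $X$ on $(0,\infty)$ such that for every pair $(f,g)$ with $f,g\in X$ satisfying the NP condition and $\|f\|_X\ge\|g\|_X$, one has $\|f^*\chi_{(0,s)}\|_X\ge\|g^*\chi_{(0,s)}\|_X$ for all $s>0$. $\Lambda_r(\varphi)$ is the space of $f$ with $\|f\|_{\Lambda_r(\varphi)}=(\int_0^\infty f^*(t)^r\,d\varphi(t))^{1/r}<\infty$. $L(p,q)$ has norm $(\int_0^\infty f^*(t)^q\,d(t^{q/p}))^{1/q}$, i.e. $L(p,q)=\Lambda_q(t^{q/p})$ isometrically. *)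

theory Defs
  imports "HOL-Analysis.Analysis"
begin

text \<open>Real power on ennreal (exponent assumed positive): top stays top.\<close>
definition epow :: "ennreal \<Rightarrow> real \<Rightarrow> ennreal" where
  "epow x a = (if x = top then top else ennreal (enn2real x powr a))"

definition distf :: "(real \<Rightarrow> real) \<Rightarrow> real \<Rightarrow> ennreal" where
  "distf f y = emeasure lborel {t \<in> {0<..}. y < \<bar>f t\<bar>}"

text \<open>Nonincreasing rearrangement f*(t) = inf{lambda >= 0. d_f(lambda) <= t}
  (value top if the set is empty).\<close>
definition rearr :: "(real \<Rightarrow> real) \<Rightarrow> real \<Rightarrow> ennreal" where
  "rearr f t = Inf (ennreal ` {y. 0 \<le> y \<and> distf f y \<le> ennreal t})"

text \<open>A rearrangement invariant Banach function space on (0,infinity), given by its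
  function norm rho (X = measurable f with rho f finite); Bennett-Sharpley axioms.\<close>
definition ri_space :: "((real \<Rightarrow> real) \<Rightarrow> ennreal) \<Rightarrow> bool" where
  "ri_space \<rho> \<longleftrightarrow>
    (\<forall>f\<in>borel_measurable lborel. \<rho> f = 0 \<longleftrightarrow> (AE t in lborel. 0 < t \<longrightarrow> f t = 0))
  \<and> (\<forall>f\<in>borel_measurable lborel. \<forall>c::real. \<rho> (\<lambda>t. c * f t) = ennreal \<bar>c\<bar> * \<rho> f)
  \<and> (\<forall>f\<in>borel_measurable lborel. \<forall>g\<in>borel_measurable lborel.
        \<rho> (\<lambda>t. f t + g t) \<le> \<rho> f + \<rho> g)
  \<and> (\<forall>f\<in>borel_measurable lborel. \<forall>g\<in>borel_measurable lborel.
        (AE t in lborel. 0 < t \<longrightarrow> \<bar>g t\<bar> \<le> \<bar>f t\<bar>) \<longrightarrow> \<rho> g \<le> \<rho> f)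
  \<and> (\<forall>F f. (\<forall>n. F n \<in> borel_measurable lborel) \<and> f \<in> borel_measurable lborel \<and>
        (AE t in lborel. 0 < t \<longrightarrow> incseq (\<lambda>n. \<bar>F n t\<bar>) \<and> (\<lambda>n. \<bar>F n t\<bar>) \<longlonglongrightarrow> \<bar>f t\<bar>)
        \<longrightarrow> (\<lambda>n. \<rho> (F n)) \<longlonglongrightarrow> \<rho> f)
  \<and> (\<forall>E\<in>sets lborel. E \<subseteq> {0<..} \<and> emeasure lborel E < top \<longrightarrow>
        \<rho> (indicator E) < top \<and>
        (\<exists>C::real. \<forall>f\<in>borel_measurable lborel.
            (\<integral>\<^sup>+t\<in>E. ennreal \<bar>f t\<bar> \<partial>lborel) \<le> ennreal C * \<rho> f))
  \<and> (\<forall>f\<in>borel_measurable lborel. \<forall>g\<in>borel_measurable lborel.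
        (\<forall>y\<ge>0. distf f y = distf g y) \<longrightarrow> \<rho> f = \<rho> g)"

definition NP :: "(real \<Rightarrow> real) \<Rightarrow> (real \<Rightarrow> real) \<Rightarrow> bool" where
  "NP f g \<longleftrightarrow> (\<exists>t0>0. (\<forall>t. 0 < t \<and> t \<le> t0 \<longrightarrow> rearr g t \<le> rearr f t)
                     \<and> (\<forall>t\<ge>t0. rearr f t \<le> rearr g t))"

definition trunc_rearr :: "(real \<Rightarrow> real) \<Rightarrow> real \<Rightarrow> real \<Rightarrow> real" where
  "trunc_rearr f s = (\<lambda>t. enn2real (rearr f t) * indicator {0<..<s} t)"

definition in_class_X :: "((real \<Rightarrow> real) \<Rightarrow> ennreal) \<Rightarrow> bool" where
  "in_class_X \<rho> \<longleftrightarrow> ri_space \<rho> \<and>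
    (\<forall>f\<in>borel_measurable lborel. \<forall>g\<in>borel_measurable lborel.
       \<rho> f < top \<and> \<rho> g < top \<and> NP f g \<and> \<rho> g \<le> \<rho> f \<longrightarrow>
       (\<forall>s>0. \<rho> (trunc_rearr g s) \<le> \<rho> (trunc_rearr f s)))"

definition stieltjes :: "(real \<Rightarrow> real) \<Rightarrow> real measure" where
  "stieltjes \<phi> = interval_measure (\<lambda>t. if t \<le> 0 then 0 else \<phi> t)"

definition lorentz_norm :: "(real \<Rightarrow> real) \<Rightarrow> real \<Rightarrow> (real \<Rightarrow> real) \<Rightarrow> ennreal" where
  "lorentz_norm \<phi> r f = epow (\<integral>\<^sup>+t. epow (rearr f t) r \<partial>stieltjes \<phi>) (1 / r)"

definition Lpq_norm :: "real \<Rightarrow> real \<Rightarrow> (real \<Rightarrow> real) \<Rightarrow> ennreal" where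
  "Lpq_norm p q f = epow (\<integral>\<^sup>+t. epow (rearr f t) q \<partial>stieltjes (\<lambda>t. t powr (q / p))) (1 / q)"

end

theory Submission
  imports Defs
begin

lemma lborel_Ioi_top: "emeasure lborel {0::real<..} = top"
proof -
  have "ennreal (real n) \<le> emeasure lborel {0::real<..}" for n
  proof -
    have "emeasure lborel {0::real<..<real n} \<le> emeasure lborel {0::real<..}"
      by (rule emeasure_mono) auto
    then show ?thesis by simp
  qed
  then show ?thesis by (metis ennreal_Ex_less_of_nat ennreal_of_nat_eq_real_of_nat linorder_less_linear linorder_not_less top.extremum_strict)
qed

lemma lborel_pos_less_enn: "emeasure lborel {l::real. 0 < l \<and> ennreal l < x} = x"
proof (cases "x = top")
  case True
  then have "{l::real. 0 < l \<and> ennreal l < x} = {0<..}" by auto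
  then show ?thesis using True by (simp add: lborel_Ioi_top)
next
  case False
  then obtain a where a: "x = ennreal a" "0 \<le> a" by (metis enn2real_nonneg ennreal_enn2real_if)
  then have "{l::real. 0 < l \<and> ennreal l < x} = {0<..<a}"
    by (auto simp: ennreal_less_iff)
  then show ?thesis using a by simp
qed

lemma layer_cake:
  assumes sf: "sigma_finite_measure M" and h[measurable]: "h \<in> borel_measurable M"
  shows "(\<integral>\<^sup>+x. h x \<partial>M) = (\<integral>\<^sup>+l. indicator {0<..} l * emeasure M {x\<in>space M. ennreal l < h x} \<partial>lborel)"
proof -
  interpret M: sigma_finite_measure M by (rule sf)
  interpret P: pair_sigma_finite M lborel
    by (simp add: M.sigma_finite_measure_axioms lborel.sigma_finite_measure_axioms pair_sigma_finite.intro)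
  have "(\<integral>\<^sup>+x. h x \<partial>M) = (\<integral>\<^sup>+x. (\<integral>\<^sup>+l. indicator {0<..} l * indicator {l. ennreal l < h x} l \<partial>lborel) \<partial>M)"
  proof (rule nn_integral_cong)
    fix x
    have "(\<integral>\<^sup>+l. indicator {0<..} l * indicator {l. ennreal l < h x} l \<partial>lborel)
        = (\<integral>\<^sup>+l. indicator {l. 0 < l \<and> ennreal l < h x} l \<partial>lborel)"
      by (intro nn_integral_cong) (auto split: split_indicator)
    also have "\<dots> = h x" by (simp add: lborel_pos_less_enn)
    finally show "h x = (\<integral>\<^sup>+l. indicator {0<..} l * indicator {l. ennreal l < h x} l \<partial>lborel)" by simp
  qed
  also have "\<dots> = (\<integral>\<^sup>+l. (\<integral>\<^sup>+x. indicator {0<..} l * indicator {l. ennreal l < h x} l \<partial>M) \<partial>lborel)"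
    by (rule P.Fubini'[symmetric]) measurable
  also have "\<dots> = (\<integral>\<^sup>+l. indicator {0<..} l * emeasure M {x\<in>space M. ennreal l < h x} \<partial>lborel)"
  proof (rule nn_integral_cong)
    fix l
    have A: "(\<integral>\<^sup>+x. indicator {0<..} l * indicator {l. ennreal l < h x} l \<partial>M)
         = (\<integral>\<^sup>+x. indicator {0<..} l * indicator {x\<in>space M. ennreal l < h x} x \<partial>M)"
      by (rule nn_integral_cong) (auto split: split_indicator)
    have B: "(\<integral>\<^sup>+x. indicator {0<..} l * indicator {x\<in>space M. ennreal l < h x} x \<partial>M) = indicator {0<..} l * (\<integral>\<^sup>+x. indicator {x\<in>space M. ennreal l < h x} x \<partial>M)"
      by (rule nn_integral_cmult) measurable
    have C: "(\<integral>\<^sup>+x. indicator {x\<in>space M. ennreal l < h x} x \<partial>M) = emeasure M {x\<in>space M. ennreal l < h x}"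
      by (rule nn_integral_indicator) measurable
    show "(\<integral>\<^sup>+x. indicator {0<..} l * indicator {l. ennreal l < h x} l \<partial>M) = indicator {0<..} l * emeasure M {x\<in>space M. ennreal l < h x}"
      using A B C by simp
  qed
  finally show ?thesis .
qed

lemma distf_antimono:
  assumes f[measurable]: "f \<in> borel_measurable borel" and "y \<le> y'"
  shows "distf f y' \<le> distf f y"
  unfolding distf_def using assms(2) by (intro emeasure_mono) auto

lemma distf_SUP:
  assumes f[measurable]: "f \<in> borel_measurable borel"
  shows "distf f y = (SUP n. distf f (y + inverse (real (Suc n))))"
proof -
  let ?A = "\<lambda>n. {t\<in>{0<..}. y + inverse (real (Suc n)) < \<bar>f t\<bar>}"
  have inc: "incseq ?A"
  proof (rule incseq_SucI, safe)
    fix n t assume "y + inverse (real (Suc n)) < \<bar>f t\<bar>"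
    moreover have "inverse (real (Suc (Suc n))) \<le> inverse (real (Suc n))"
      by (simp add: field_simps)
    ultimately show "y + inverse (real (Suc (Suc n))) < \<bar>f t\<bar>" by linarith
  qed
  have U: "(\<Union>n. ?A n) = {t\<in>{0<..}. y < \<bar>f t\<bar>}"
  proof safe
    fix t n assume "y + inverse (real (Suc n)) < \<bar>f t\<bar>"
    moreover have "0 < inverse (real (Suc n))" by simp
    ultimately show "y < \<bar>f t\<bar>" by linarith
  next
    fix t :: real assume t: "0 < t" "y < \<bar>f t\<bar>"
    then obtain n where "inverse (real (Suc n)) < \<bar>f t\<bar> - y"
      using reals_Archimedean[of "\<bar>f t\<bar> - y"] by auto
    then have "y + inverse (real (Suc n)) < \<bar>f t\<bar>" by linarith
    then show "t \<in> (\<Union>n. ?A n)" using t by blast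
  qed
  have "(SUP n. emeasure lborel (?A n)) = emeasure lborel (\<Union>n. ?A n)"
    by (rule SUP_emeasure_incseq[OF _ inc]) auto
  then show ?thesis unfolding distf_def U by simp
qed

lemma rearr_le_iff:
  assumes f[measurable]: "f \<in> borel_measurable borel" and t: "0 \<le> t" and y: "0 \<le> y"
  shows "rearr f t \<le> ennreal y \<longleftrightarrow> distf f y \<le> ennreal t"
proof
  assume "distf f y \<le> ennreal t"
  then show "rearr f t \<le> ennreal y"
    unfolding rearr_def using y by (intro Inf_lower) auto
next
  assume le: "rearr f t \<le> ennreal y"
  have "distf f (y + inverse (real (Suc n))) \<le> ennreal t" for n
  proof -
    have "ennreal y < ennreal (y + inverse (real (Suc n)))"
      using y by (subst ennreal_less_iff) auto
    with le obtain a where a: "a \<in> ennreal ` {y. 0 \<le> y \<and> distf f y \<le> ennreal t}"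
        "a < ennreal (y + inverse (real (Suc n)))"
      unfolding rearr_def Inf_le_iff by blast
    then obtain y' where y': "0 \<le> y'" "distf f y' \<le> ennreal t" "a = ennreal y'" by auto
    have "ennreal y' < ennreal (y + inverse (real (Suc n)))"
      using a(2) unfolding y'(3) .
    then have "y' < y + inverse (real (Suc n))"
      using ennreal_less_iff[OF y'(1)] by blast
    then have "distf f (y + inverse (real (Suc n))) \<le> distf f y'"
      by (intro distf_antimono) auto
    then show ?thesis using y' by simp
  qed
  then show "distf f y \<le> ennreal t"
    by (subst distf_SUP[OF f]) (auto intro: SUP_least)
qed

lemma rearr_antimono: "t \<le> t' \<Longrightarrow> rearr f t' \<le> rearr f t"
  unfolding rearr_def
  by (intro Inf_superset_mono image_mono) (auto intro: order_trans ennreal_leI)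

lemma rearr_less_iff:
  assumes f[measurable]: "f \<in> borel_measurable borel" and t: "0 \<le> t" and y: "0 \<le> y"
  shows "ennreal y < rearr f t \<longleftrightarrow> ennreal t < distf f y"
  using rearr_le_iff[OF assms] by (simp add: not_le[symmetric])

locale lor =
  fixes \<phi> :: "real \<Rightarrow> real"
  assumes smono: "strict_mono_on {0..} \<phi>"
    and conc: "concave_on {0..} \<phi>"
    and lim0: "(\<phi> \<longlongrightarrow> 0) (at_right 0)"
begin

definition F :: "real \<Rightarrow> real" where "F t = (if t \<le> 0 then 0 else \<phi> t)"

definition Phi :: "ennreal \<Rightarrow> ennreal" where
  "Phi x = emeasure (stieltjes \<phi>) {t. 0 < t \<and> ennreal t < x}"

definition Ch :: "(real \<Rightarrow> real) \<Rightarrow> ennreal" where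
  "Ch u = (\<integral>\<^sup>+l. indicator {0<..} l * Phi (distf u l) \<partial>lborel)"

lemma nu_eq: "stieltjes \<phi> = interval_measure F"
  by (simp add: stieltjes_def F_def[abs_def])

lemma phi_less: "0 \<le> x \<Longrightarrow> x < y \<Longrightarrow> \<phi> x < \<phi> y"
  using smono by (auto intro: strict_mono_onD)

lemma phi_mono: "0 \<le> x \<Longrightarrow> x \<le> y \<Longrightarrow> \<phi> x \<le> \<phi> y"
  using phi_less by (cases "x = y") (auto simp: le_less)

lemma phi_nonneg: assumes "0 < t" shows "0 \<le> \<phi> t"
proof -
  have "\<forall>\<^sub>F s in at_right 0. \<phi> s \<le> \<phi> t"
    using assms unfolding eventually_at_right_field
    by (intro exI[of _ t]) (auto intro: phi_mono)
  from tendsto_upperbound[OF lim0 this] show ?thesis by simp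
qed

lemma phi_pos: assumes "0 < t" shows "0 < \<phi> t"
  using phi_nonneg[of "t/2"] phi_less[of "t/2" t] assms by auto

lemma conc_pos: "concave_on {0<..} \<phi>"
  using conc unfolding concave_on_def by (rule convex_on_subset) auto

lemma phi_cont: "continuous_on {0<..} \<phi>"
proof -
  have "continuous_on {0<..} (\<lambda>x. - \<phi> x)"
    using conc_pos unfolding concave_on_def by (intro convex_on_continuous) auto
  from continuous_on_minus[OF this] show ?thesis by simp
qed

lemma F_nonneg: "0 \<le> F t"
  using phi_nonneg by (auto simp: F_def)

lemma F_mono: "x \<le> y \<Longrightarrow> F x \<le> F y"
  using phi_nonneg phi_mono by (auto simp: F_def)

lemma F_pos: "0 < t \<Longrightarrow> 0 < F t"
  using phi_pos by (auto simp: F_def)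

lemma F_isCont: "isCont F x"
proof (cases "x < 0")
  case True
  have "eventually (\<lambda>y. y \<in> {..<0}) (nhds x)" by (rule eventually_nhds_in_open) (use True in auto)
  then have "\<forall>\<^sub>F y in nhds x. F y = 0" by eventually_elim (auto simp: F_def)
  then have "isCont F x = isCont (\<lambda>_. 0::real) x" by (rule isCont_cong)
  then show ?thesis by simp
next
  case False
  show ?thesis
  proof (cases "x = 0")
    case True
    have l: "continuous (at_left 0) F"
    proof -
      have "((\<lambda>_. 0::real) \<longlongrightarrow> 0) (at_left 0)" by simp
      moreover have "\<forall>\<^sub>F y in at_left 0. F y = 0"
        unfolding eventually_at_left_field by (intro exI[of _ "-1"]) (auto simp: F_def)
      ultimately have "(F \<longlongrightarrow> 0) (at_left 0)"
        by (intro tendsto_eventually) auto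
      then show ?thesis unfolding continuous_within by (simp add: F_def)
    qed
    have r: "continuous (at_right 0) F"
    proof -
      have "\<forall>\<^sub>F y in at_right 0. \<phi> y = F y"
        unfolding eventually_at_right_field by (intro exI[of _ "1"]) (auto simp: F_def)
      then have "(F \<longlongrightarrow> 0) (at_right 0)"
        by (rule Lim_transform_eventually[OF lim0])
      then show ?thesis unfolding continuous_within by (simp add: F_def)
    qed
    show ?thesis using True l r continuous_at_split by blast
  next
    case False
    then have x: "0 < x" using \<open>\<not> x < 0\<close> by auto
    have "eventually (\<lambda>y. y \<in> {0<..}) (nhds x)" by (rule eventually_nhds_in_open) (use x in auto)
    then have "\<forall>\<^sub>F y in nhds x. F y = \<phi> y" by eventually_elim (auto simp: F_def)
    then have "isCont F x = isCont \<phi> x" by (rule isCont_cong)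
    moreover have "isCont \<phi> x"
      using phi_cont x by (simp add: continuous_on_eq_continuous_at)
    ultimately show ?thesis by simp
  qed
qed

lemma F_cont: "continuous_on UNIV F"
  using F_isCont by (simp add: continuous_at_imp_continuous_on)

lemma F_right_cont: "continuous (at_right a) F"
  using F_isCont by (simp add: continuous_at_split)

lemma nu_Ioc: "a \<le> b \<Longrightarrow> emeasure (stieltjes \<phi>) {a<..b} = ennreal (F b - F a)"
  unfolding nu_eq by (rule emeasure_interval_measure_Ioc) (auto intro: F_mono F_right_cont)

lemma nu_Icc: "a \<le> b \<Longrightarrow> emeasure (stieltjes \<phi>) {a..b} = ennreal (F b - F a)"
  unfolding nu_eq by (rule emeasure_interval_measure_Icc) (auto intro: F_mono F_cont)

lemma sets_nu[simp, measurable_cong]: "sets (stieltjes \<phi>) = sets borel"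
  by (simp add: nu_eq)

lemma space_nu[simp]: "space (stieltjes \<phi>) = UNIV"
  by (simp add: nu_eq)

lemma sigma_finite_nu: "sigma_finite_measure (stieltjes \<phi>)"
  unfolding nu_eq by (rule sigma_finite_interval_measure) (auto intro: F_mono F_right_cont)

lemma nu_sing: "emeasure (stieltjes \<phi>) {a} = 0"
  using nu_Icc[of a a] by simp


lemma nu_nonpos: "emeasure (stieltjes \<phi>) {..0} = 0"
proof -
  have "{..0::real} = (\<Union>n. {- real n..0})"
  proof safe
    fix x :: real assume "x \<le> 0"
    obtain n where "-x \<le> real n" using real_arch_simple by blast
    then have "x \<in> {- real n..0}" using \<open>x \<le> 0\<close> by auto
    then show "x \<in> (\<Union>n. {- real n..0})" by blast
  qed auto
  moreover have "emeasure (stieltjes \<phi>) (\<Union>n. {- real n..0}) = 0"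
    by (rule emeasure_UN_eq_0) (auto simp: nu_Icc F_def)
  ultimately show ?thesis by simp
qed

lemma AE_nu_pos: "AE t in stieltjes \<phi>. 0 < t"
  by (rule AE_I'[of "{..0}"]) (auto simp: nu_nonpos null_sets_def)

lemma nu_restrict_pos:
  assumes [measurable]: "A \<in> sets borel"
  shows "emeasure (stieltjes \<phi>) A = emeasure (stieltjes \<phi>) {t\<in>A. 0 < t}"
proof (rule emeasure_eq_AE)
  show "AE x in stieltjes \<phi>. (x \<in> A) = (x \<in> {t \<in> A. 0 < t})"
    using AE_nu_pos by eventually_elim auto
qed auto

lemma Phi_ennreal: assumes y: "0 \<le> y" shows "Phi (ennreal y) = ennreal (F y)"
proof (cases "y = 0")
  case True
  then show ?thesis by (simp add: Phi_def F_def)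
next
  case False
  then have y: "0 < y" using y by auto
  have S: "{t. 0 < t \<and> ennreal t < ennreal y} = {0<..<y}"
    using y by (auto simp: ennreal_less_iff)
  have "emeasure (stieltjes \<phi>) {0<..y} = emeasure (stieltjes \<phi>) ({0<..<y} \<union> {y})"
    using y by (intro arg_cong[where f="emeasure _"]) auto
  also have "\<dots> = emeasure (stieltjes \<phi>) {0<..<y} + emeasure (stieltjes \<phi>) {y}"
    by (rule plus_emeasure[symmetric]) auto
  finally have "emeasure (stieltjes \<phi>) {0<..<y} = ennreal (F y - F 0)"
    using y by (simp add: nu_sing nu_Ioc)
  then show ?thesis unfolding Phi_def S by (simp add: F_def)
qed

lemma Phi_0[simp]: "Phi 0 = 0"
  by (simp add: Phi_def)

lemma Phi_mono: "x \<le> y \<Longrightarrow> Phi x \<le> Phi y"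
  unfolding Phi_def by (intro emeasure_mono) (auto intro: less_le_trans)

lemma Phi_SUP:
  assumes "incseq X" shows "Phi (SUP n. X n) = (SUP n. Phi (X n))"
proof -
  have inc: "incseq (\<lambda>n. {t. 0 < t \<and> ennreal t < X n})"
    using assms unfolding incseq_def by (auto intro: less_le_trans)
  have "(\<Union>n. {t. 0 < t \<and> ennreal t < X n}) = {t. 0 < t \<and> ennreal t < (SUP n. X n)}"
    by (auto simp: less_SUP_iff)
  moreover have "(SUP n. emeasure (stieltjes \<phi>) {t. 0 < t \<and> ennreal t < X n}) = emeasure (stieltjes \<phi>) (\<Union>n. {t. 0 < t \<and> ennreal t < X n})"
    by (rule SUP_emeasure_incseq[OF _ inc]) auto
  ultimately show ?thesis unfolding Phi_def by simp
qed

lemma Phi_top: "Phi top = (SUP n. ennreal (F (real n)))"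
proof -
  have E: "(\<lambda>n. ennreal (real n)) = (\<lambda>n. of_nat n)" by (simp add: ennreal_of_nat_eq_real_of_nat)
  have T: "(SUP n. ennreal (real n)) = top" unfolding E by (rule ennreal_SUP_of_nat_eq_top)
  have "Phi top = Phi (SUP n. ennreal (real n))" by (simp only: T)
  also have "\<dots> = (SUP n. Phi (ennreal (real n)))" by (rule Phi_SUP) (auto simp: incseq_def)
  finally show ?thesis by (simp add: Phi_ennreal)
qed

lemma Phi_pos: assumes "0 < x" shows "0 < Phi x"
proof (cases "x = top")
  case True
  have "Phi 1 \<le> Phi x" using True by (intro Phi_mono) auto
  moreover have "Phi 1 = ennreal (F 1)" using Phi_ennreal[of 1] by simp
  moreover have "0 < ennreal (F 1)" using F_pos[of 1] by simp
  ultimately show ?thesis by (metis less_le_trans)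
next
  case False
  define a where "a = enn2real x"
  have a: "x = ennreal a" "0 \<le> a" using False unfolding a_def
    by (simp_all add: ennreal_enn2real_if top.not_eq_extremum)
  then have "0 < a" using assms by (metis ennreal_less_zero_iff)
  then have "0 < F a" by (rule F_pos)
  then show ?thesis unfolding a(1) Phi_ennreal[OF a(2)] by simp
qed

lemma Phi_eq_0_iff: "Phi x = 0 \<longleftrightarrow> x = 0"
  using Phi_pos[of x] by (metis Phi_0 not_gr_zero)

lemma Phi_less_top: "x < top \<Longrightarrow> Phi x < top"
  by (metis Phi_ennreal enn2real_nonneg ennreal_enn2real_if ennreal_less_top top.not_eq_extremum)

lemma nu_finite_Ioc: "emeasure (stieltjes \<phi>) {a<..b} < top"
  by (cases "a \<le> b") (auto simp: nu_Ioc)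

end

lemma epow_top[simp]: "epow top a = top"
  by (simp add: epow_def)

lemma epow_ennreal[simp]: "0 \<le> x \<Longrightarrow> epow (ennreal x) a = ennreal (x powr a)"
  by (simp add: epow_def)

lemma epow_0[simp]: "epow 0 a = 0"
  by (simp add: epow_def)

lemma enn_cases:
  obtains (top) "x = top" | (fin) y where "x = ennreal y" "0 \<le> y"
  by (metis enn2real_nonneg ennreal_enn2real_if)

lemma real_powr_less_iff:
  fixes s t a :: real
  assumes a: "0 < a" and s: "0 \<le> s" and t: "0 \<le> t"
  shows "s < t powr a \<longleftrightarrow> s powr (1/a) < t"
proof
  assume "s < t powr a"
  then have "s powr (1/a) < (t powr a) powr (1/a)"
    using s a by (intro powr_less_mono2) auto
  also have "\<dots> = t" using a t by (simp add: powr_powr)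
  finally show "s powr (1/a) < t" .
next
  assume "s powr (1/a) < t"
  then have "(s powr (1/a)) powr a < t powr a"
    using s a by (intro powr_less_mono2) auto
  also have "(s powr (1/a)) powr a = s" using a s by (simp add: powr_powr)
  finally show "s < t powr a" .
qed

lemma epow_less_iff:
  assumes a: "0 < a"
  shows "c < epow x a \<longleftrightarrow> epow c (1/a) < x"
proof (cases c rule: enn_cases)
  case top
  then show ?thesis by simp
next
  case (fin s)
  note fin1 = fin
  show ?thesis
  proof (cases x rule: enn_cases)
    case top
    then show ?thesis using fin1 by simp
  next
    case (fin t)
    note fin2 = fin
    note fin = fin1
    have "s < t powr a \<longleftrightarrow> s powr (1/a) < t"
    proof
      assume "s < t powr a"
      then have "s powr (1/a) < (t powr a) powr (1/a)"
        using fin a by (intro powr_less_mono2) auto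
      also have "\<dots> = t" using a fin2 by (simp add: powr_powr)
      finally show "s powr (1/a) < t" .
    next
      assume "s powr (1/a) < t"
      then have "(s powr (1/a)) powr a < t powr a"
        using fin a by (intro powr_less_mono2) auto
      also have "(s powr (1/a)) powr a = s" using a fin by (simp add: powr_powr)
      finally show "s < t powr a" .
    qed
    then show ?thesis using fin fin2 by (simp add: ennreal_less_iff)
  qed
qed

lemma epow_le_iff:
  assumes a: "0 < a"
  shows "epow x a \<le> c \<longleftrightarrow> x \<le> epow c (1/a)"
  using epow_less_iff[OF a, of c x] by (simp add: not_less[symmetric])

lemma epow_epow:
  assumes a: "0 < a" shows "epow (epow x a) (1/a) = x"
proof (cases x rule: enn_cases)
  case top then show ?thesis by simp
next
  case (fin t)
  then show ?thesis using a by (simp add: powr_powr)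
qed

lemma epow_mono:
  assumes "0 \<le> a" "x \<le> y" shows "epow x a \<le> epow y a"
proof (cases y rule: enn_cases)
  case top then show ?thesis by simp
next
  case (fin t)
  then obtain s where s: "x = ennreal s" "0 \<le> s" "s \<le> t"
    using assms(2) by (metis enn_cases ennreal_le_iff ennreal_top_neq_zero fin(1) ennreal_neq_top top.extremum_unique)
  then show ?thesis using fin assms by (simp add: powr_mono2)
qed

lemma epow_le_epow_iff:
  assumes a: "0 < a" shows "epow x a \<le> epow y a \<longleftrightarrow> x \<le> y"
  using epow_le_iff[OF a, of x "epow y a"] epow_epow[OF a, of y] by simp

lemma epow_less_top_iff:
  assumes a: "0 < a" shows "epow x a < top \<longleftrightarrow> x < top"
  by (cases x rule: enn_cases) auto

lemma epow_eq_0_iff: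
  assumes a: "0 < a" shows "epow x a = 0 \<longleftrightarrow> x = 0"
  by (cases x rule: enn_cases) auto

lemma epow_mult:
  assumes a: "0 < a" and c: "0 \<le> c"
  shows "epow (ennreal c * x) a = ennreal (c powr a) * epow x a"
proof (cases x rule: enn_cases)
  case top
  then show ?thesis
    using a c by (cases "c = 0") (auto simp: ennreal_mult_top)
next
  case (fin t)
  then show ?thesis using a c
    by (simp add: ennreal_mult[symmetric] powr_mult)
qed

lemma epow_tendsto:
  assumes a: "0 < a" and X: "X \<longlonglongrightarrow> A"
  shows "(\<lambda>n. epow (X n) a) \<longlonglongrightarrow> epow A a"
proof (rule order_tendstoI)
  fix c assume "c < epow A a"
  then have "epow c (1/a) < A" using epow_less_iff[OF a] by simp
  then have "\<forall>\<^sub>F n in sequentially. epow c (1/a) < X n"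
    using order_tendstoD(1)[OF X] by blast
  then show "\<forall>\<^sub>F n in sequentially. c < epow (X n) a"
    by eventually_elim (simp add: epow_less_iff[OF a])
next
  fix c assume "epow A a < c"
  then have "A < epow c (1/a)"
    using epow_less_iff[of "1/a" A c] a by simp
  then have "\<forall>\<^sub>F n in sequentially. X n < epow c (1/a)"
    using order_tendstoD(2)[OF X] by blast
  then show "\<forall>\<^sub>F n in sequentially. epow (X n) a < c"
    by eventually_elim (use epow_less_iff[of "1/a" _ c] a in simp)
qed

lemma down_closed_borel:
  fixes S :: "real set"
  assumes dc: "\<And>x x'. x' \<le> x \<Longrightarrow> x \<in> S \<Longrightarrow> x' \<in> S"
  shows "S \<in> sets borel"
proof (cases "S = UNIV \<or> S = {}")
  case True then show ?thesis by auto
next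
  case False
  then obtain x0 where x0: "x0 \<notin> S" and ne: "S \<noteq> {}" by auto
  have ub: "x < x0" if "x \<in> S" for x
    using dc[of x0 x] that x0 by (metis linorder_not_less)
  then have bdd: "bdd_above S" by (meson bdd_aboveI less_imp_le)
  define s where "s = Sup S"
  have 1: "x \<le> s" if "x \<in> S" for x
    unfolding s_def using bdd that by (intro cSup_upper)
  have 2: "x \<in> S" if "x < s" for x
  proof -
    have "x < Sup S" using that by (simp add: s_def)
    then obtain y where "y \<in> S" "x < y" using less_cSup_iff[OF ne bdd] by auto
    then show "x \<in> S" using dc[of x y] by auto
  qed
  have "S = {..<s} \<union> (S \<inter> {s})"
    using 1 2 by (auto simp: order.order_iff_strict)
  moreover have "S \<inter> {s} \<in> sets borel"
    by (cases "s \<in> S") auto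
  ultimately show ?thesis by (metis sets.Un atMost_borel lessThan_borel)
qed

lemma antimono_borel_measurable:
  fixes g :: "real \<Rightarrow> 'b::{linorder_topology, second_countable_topology}"
  assumes "\<And>x y. x \<le> y \<Longrightarrow> g y \<le> g x"
  shows "g \<in> borel_measurable borel"
proof (rule borel_measurableI_greater)
  fix y
  have "{x. y < g x} \<in> sets borel"
    by (rule down_closed_borel) (use assms in \<open>auto intro: less_le_trans\<close>)
  then show "{x \<in> space borel. y < g x} \<in> sets borel" by simp
qed


context lor
begin

lemma meas_nu_eq: "borel_measurable (stieltjes \<phi>) = borel_measurable borel"
  by (rule measurable_cong_sets) auto

lemma rearr_epow_measurable:
  assumes "0 \<le> r" shows "(\<lambda>t. epow (rearr f t) r) \<in> borel_measurable borel"
  by (rule antimono_borel_measurable) (intro epow_mono assms rearr_antimono)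

lemma distf_powr:
  assumes r: "0 < r" and l: "0 < l"
  shows "distf f (l powr (1/r)) = distf (\<lambda>t. \<bar>f t\<bar> powr r) l"
proof -
  have "{t\<in>{0<..}. l powr (1/r) < \<bar>f t\<bar>} = {t\<in>{0<..}. l < \<bar>\<bar>f t\<bar> powr r\<bar>}"
    using real_powr_less_iff[OF r, of l] l by auto
  then show ?thesis unfolding distf_def by simp
qed

lemma L_eq_Ch:
  assumes f[measurable]: "f \<in> borel_measurable borel" and r: "0 < r"
  shows "(\<integral>\<^sup>+t. epow (rearr f t) r \<partial>stieltjes \<phi>) = Ch (\<lambda>t. \<bar>f t\<bar> powr r)"
proof -
  have m: "(\<lambda>t. epow (rearr f t) r) \<in> borel_measurable (stieltjes \<phi>)"
    unfolding meas_nu_eq using r by (intro rearr_epow_measurable) auto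
  have "(\<integral>\<^sup>+t. epow (rearr f t) r \<partial>stieltjes \<phi>) = (\<integral>\<^sup>+l. indicator {0<..} l *
      emeasure (stieltjes \<phi>) {t\<in>space (stieltjes \<phi>). ennreal l < epow (rearr f t) r} \<partial>lborel)"
    by (rule layer_cake[OF sigma_finite_nu m])
  also have "\<dots> = Ch (\<lambda>t. \<bar>f t\<bar> powr r)"
    unfolding Ch_def
  proof (rule nn_integral_cong)
    fix l :: real
    show "indicator {0<..} l * emeasure (stieltjes \<phi>) {t\<in>space (stieltjes \<phi>). ennreal l < epow (rearr f t) r}
      = indicator {0<..} l * Phi (distf (\<lambda>t. \<bar>f t\<bar> powr r) l)"
    proof (cases "0 < l")
      case False then show ?thesis by simp
    next
      case True
      have meas: "{t. ennreal l < epow (rearr f t) r} \<in> sets borel"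
        using m unfolding meas_nu_eq by measurable
      have "emeasure (stieltjes \<phi>) {t\<in>space (stieltjes \<phi>). ennreal l < epow (rearr f t) r}
          = emeasure (stieltjes \<phi>) {t\<in>{t. ennreal l < epow (rearr f t) r}. 0 < t}"
        using nu_restrict_pos[OF meas] by simp
      also have "{t\<in>{t. ennreal l < epow (rearr f t) r}. 0 < t} = {t. 0 < t \<and> ennreal t < distf f (l powr (1/r))}"
      proof -
        have "ennreal l < epow (rearr f t) r \<longleftrightarrow> ennreal t < distf f (l powr (1/r))" if t: "0 < t" for t
        proof -
          have "ennreal l < epow (rearr f t) r \<longleftrightarrow> epow (ennreal l) (1/r) < rearr f t"
            by (rule epow_less_iff[OF r])
          also have "\<dots> \<longleftrightarrow> ennreal (l powr (1/r)) < rearr f t"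
            using True by simp
          also have "\<dots> \<longleftrightarrow> ennreal t < distf f (l powr (1/r))"
            using t by (intro rearr_less_iff f) auto
          finally show ?thesis .
        qed
        then show ?thesis by auto
      qed
      also have "emeasure (stieltjes \<phi>) \<dots> = Phi (distf f (l powr (1/r)))"
        by (simp add: Phi_def)
      also have "\<dots> = Phi (distf (\<lambda>t. \<bar>f t\<bar> powr r) l)"
        using distf_powr[OF r True] by simp
      finally show ?thesis by simp
    qed
  qed
  finally show ?thesis .
qed

end

context lor
begin

lemma Phi_distf_measurable[measurable]:
  assumes [measurable]: "u \<in> borel_measurable borel"
  shows "(\<lambda>l. Phi (distf u l)) \<in> borel_measurable borel"
  by (rule antimono_borel_measurable) (intro Phi_mono distf_antimono assms)

lemma Ch_integrand_measurable[measurable]: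
  assumes [measurable]: "u \<in> borel_measurable borel"
  shows "(\<lambda>l. indicator {0<..} l * Phi (distf u l)) \<in> borel_measurable borel"
  by measurable

lemma Ch_mono_distf:
  assumes "\<And>l. 0 < l \<Longrightarrow> distf u l \<le> distf v l"
  shows "Ch u \<le> Ch v"
  unfolding Ch_def
  by (intro nn_integral_mono) (auto split: split_indicator intro!: mult_left_mono Phi_mono assms)

lemma distf_mono_AE:
  assumes [measurable]: "u \<in> borel_measurable borel" "v \<in> borel_measurable borel"
    and "AE t in lborel. 0 < t \<longrightarrow> \<bar>u t\<bar> \<le> \<bar>v t\<bar>"
  shows "distf u l \<le> distf v l"
  unfolding distf_def
  by (rule emeasure_mono_AE) (use assms(3) in \<open>auto elim!: eventually_mono\<close>)

lemma distf_cong_AE: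
  assumes [measurable]: "u \<in> borel_measurable borel" "v \<in> borel_measurable borel"
    and "AE t in lborel. 0 < t \<longrightarrow> \<bar>u t\<bar> = \<bar>v t\<bar>"
  shows "distf u l = distf v l"
  using assms(3) by (intro antisym distf_mono_AE assms) (auto elim!: eventually_mono)

lemma distf_cmult:
  assumes c: "0 < c"
  shows "distf (\<lambda>t. c * u t) l = distf u (l / c)"
proof -
  have "{t\<in>{0<..}. l < \<bar>c * u t\<bar>} = {t\<in>{0<..}. l / c < \<bar>u t\<bar>}"
    using c by (auto simp: abs_mult field_simps)
  then show ?thesis unfolding distf_def by simp
qed

lemma Ch_cmult:
  assumes c: "0 < c" and [measurable]: "u \<in> borel_measurable borel"
  shows "Ch (\<lambda>t. c * u t) = ennreal c * Ch u"
proof -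
  define G where "G l = indicator {0<..} l * Phi (distf u l)" for l
  have [measurable]: "G \<in> borel_measurable borel" unfolding G_def by measurable
  have "Ch (\<lambda>t. c * u t) = (\<integral>\<^sup>+l. G (l / c) \<partial>lborel)"
    unfolding Ch_def G_def distf_cmult[OF c]
    using c by (intro nn_integral_cong) (auto split: split_indicator simp: field_simps)
  also have "\<dots> = ennreal \<bar>c\<bar> * (\<integral>\<^sup>+x. G ((0 + c * x) / c) \<partial>lborel)"
    using c by (intro nn_integral_real_affine) auto
  also have "\<dots> = ennreal c * Ch u"
    using c unfolding Ch_def G_def by simp
  finally show ?thesis .
qed

lemma distf_zero_AE:
  assumes [measurable]: "u \<in> borel_measurable borel" and "AE t in lborel. 0 < t \<longrightarrow> u t = 0" and l: "0 \<le> l"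
  shows "distf u l = 0"
proof -
  have "distf u l \<le> distf (\<lambda>_. 0) l"
    using assms(2) by (intro distf_mono_AE) (auto elim!: eventually_mono)
  also have "distf (\<lambda>_. 0) l = 0" using l by (simp add: distf_def)
  finally show ?thesis by simp
qed

lemma Ch_zero_AE:
  assumes [measurable]: "u \<in> borel_measurable borel" and "AE t in lborel. 0 < t \<longrightarrow> u t = 0"
  shows "Ch u = 0"
  unfolding Ch_def
  by (subst nn_integral_0_iff_AE) (auto simp: distf_zero_AE[OF assms] split: split_indicator)

lemma Ch_eq_0_imp:
  assumes [measurable]: "u \<in> borel_measurable borel" and "Ch u = 0"
  shows "AE t in lborel. 0 < t \<longrightarrow> u t = 0"
proof -
  have "AE l in lborel. indicator {0<..} l * Phi (distf u l) = 0"
    using assms(2) unfolding Ch_def by (subst (asm) nn_integral_0_iff_AE) auto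
  then obtain N where N: "{l\<in>space lborel. \<not> indicator {0<..} l * Phi (distf u l) = 0} \<subseteq> N"
      "emeasure lborel N = 0" "N \<in> sets lborel"
    by (rule AE_E)
  have dz: "distf u l = 0" if l: "0 < l" for l
  proof (rule ccontr)
    assume "distf u l \<noteq> 0"
    then have "0 < distf u l" by (simp add: zero_less_iff_neq_zero)
    have "{0<..l} \<subseteq> N"
    proof
      fix x assume x: "x \<in> {0<..l}"
      then have "distf u l \<le> distf u x" by (intro distf_antimono) auto
      then have "0 < distf u x" using \<open>0 < distf u l\<close> by simp
      then have "Phi (distf u x) \<noteq> 0" using Phi_eq_0_iff by simp
      then show "x \<in> N" using N(1) x by auto
    qed
    then have "emeasure lborel {0<..l} \<le> emeasure lborel N"
      using N(3) by (intro emeasure_mono) auto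
    then show False using N(2) l by simp
  qed
  have "AE t in lborel. 0 < t \<longrightarrow> \<bar>u t\<bar> \<le> inverse (real (Suc n))" for n
  proof -
    have "emeasure lborel {t\<in>{0<..}. inverse (real (Suc n)) < \<bar>u t\<bar>} = 0"
      using dz[of "inverse (real (Suc n))"] by (simp add: distf_def)
    then show ?thesis
      by (subst AE_iff_measurable[of "{t\<in>{0<..}. inverse (real (Suc n)) < \<bar>u t\<bar>}"]) auto
  qed
  then have "AE t in lborel. \<forall>n. 0 < t \<longrightarrow> \<bar>u t\<bar> \<le> inverse (real (Suc n))"
    by (subst AE_all_countable) auto
  then show ?thesis
  proof (rule eventually_mono, intro impI)
    fix t assume *: "\<forall>n. 0 < t \<longrightarrow> \<bar>u t\<bar> \<le> inverse (real (Suc n))" and "0 < t"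
    show "u t = 0"
    proof (rule ccontr)
      assume "u t \<noteq> 0"
      then obtain n where "inverse (real (Suc n)) < \<bar>u t\<bar>"
        using reals_Archimedean[of "\<bar>u t\<bar>"] by auto
      then show False using * \<open>0 < t\<close> by (meson not_le)
    qed
  qed
qed

lemma Ch_indicator:
  assumes [measurable]: "E \<in> sets borel" and E: "E \<subseteq> {0<..}"
  shows "Ch (indicator E) = Phi (emeasure lborel E)"
proof -
  have d: "distf (indicator E) l = (if l < 1 then emeasure lborel E else 0)" if "0 < l" for l
  proof -
    have "{t\<in>{0<..}. l < \<bar>indicator E t :: real\<bar>} = (if l < 1 then E else {})"
      using E that by (auto split: split_indicator)
    then show ?thesis unfolding distf_def by simp
  qed
  have "Ch (indicator E) = (\<integral>\<^sup>+l. Phi (emeasure lborel E) * indicator {0<..<1::real} l \<partial>lborel)"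
    unfolding Ch_def
  proof (rule nn_integral_cong)
    fix l :: real
    show "indicator {0<..} l * Phi (distf (indicator E) l) = Phi (emeasure lborel E) * indicator {0<..<1} l"
      by (cases "0 < l") (auto simp: d split: split_indicator)
  qed
  also have "\<dots> = Phi (emeasure lborel E)"
    by (subst nn_integral_cmult) auto
  finally show ?thesis .
qed

lemma Ch_incseq:
  assumes U[measurable]: "\<And>n. U n \<in> borel_measurable borel" and u[measurable]: "u \<in> borel_measurable borel"
    and AE: "AE t in lborel. 0 < t \<longrightarrow> incseq (\<lambda>n. \<bar>U n t\<bar>) \<and> (\<lambda>n. \<bar>U n t\<bar>) \<longlonglongrightarrow> \<bar>u t\<bar>"
  shows "(\<lambda>n. Ch (U n)) \<longlonglongrightarrow> Ch u"
proof -
  have inc: "distf (U n) l \<le> distf (U m) l" if "n \<le> m" for n m l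
    using AE that by (intro distf_mono_AE) (auto elim!: eventually_mono simp: incseq_def)
  have sup: "distf u l = (SUP n. distf (U n) l)" for l
  proof -
    define A where "A n = {t\<in>{0<..}. l < \<bar>U n t\<bar>}" for n
    define B where "B n = (\<Union>k\<le>n. A k)" for n
    have [measurable]: "A n \<in> sets borel" for n unfolding A_def by measurable
    have [measurable]: "B n \<in> sets borel" for n unfolding B_def by measurable
    have AB: "emeasure lborel (A n) = emeasure lborel (B n)" for n
    proof (rule emeasure_eq_AE)
      show "AE x in lborel. (x \<in> A n) = (x \<in> B n)"
        using AE
      proof eventually_elim
        case (elim x)
        show ?case
        proof
          assume "x \<in> A n" then show "x \<in> B n" unfolding B_def by auto
        next
          assume "x \<in> B n"
          then obtain k where k: "k \<le> n" "x \<in> A k" unfolding B_def by auto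
          then have "0 < x" unfolding A_def by auto
          with elim have "\<bar>U k x\<bar> \<le> \<bar>U n x\<bar>" using k(1) by (auto simp: incseq_def)
          then show "x \<in> A n" using k(2) unfolding A_def by auto
        qed
      qed
    qed auto
    have Binc: "incseq B"
      unfolding B_def incseq_def by (auto intro: order_trans)
    have UB: "(\<Union>n. B n) = (\<Union>n. A n)" unfolding B_def by auto
    have "emeasure lborel {t\<in>{0<..}. l < \<bar>u t\<bar>} = emeasure lborel (\<Union>n. A n)"
    proof (rule emeasure_eq_AE)
      show "AE x in lborel. (x \<in> {t\<in>{0<..}. l < \<bar>u t\<bar>}) = (x \<in> (\<Union>n. A n))"
        using AE
      proof eventually_elim
        case (elim x)
        show ?case
        proof
          assume x: "x \<in> {t\<in>{0<..}. l < \<bar>u t\<bar>}"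
          then have "incseq (\<lambda>n. \<bar>U n x\<bar>)" "(\<lambda>n. \<bar>U n x\<bar>) \<longlonglongrightarrow> \<bar>u x\<bar>" using elim by auto
          then have "\<forall>\<^sub>F n in sequentially. l < \<bar>U n x\<bar>"
            using x order_tendstoD(1) by auto
          then obtain n where "l < \<bar>U n x\<bar>" by (auto dest: eventually_happens)
          then show "x \<in> (\<Union>n. A n)" using x unfolding A_def by auto
        next
          assume "x \<in> (\<Union>n. A n)"
          then obtain n where n: "0 < x" "l < \<bar>U n x\<bar>" unfolding A_def by auto
          then have "incseq (\<lambda>n. \<bar>U n x\<bar>)" "(\<lambda>n. \<bar>U n x\<bar>) \<longlonglongrightarrow> \<bar>u x\<bar>" using elim by auto
          then have "\<bar>U n x\<bar> \<le> \<bar>u x\<bar>" by (rule incseq_le)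
          then show "x \<in> {t\<in>{0<..}. l < \<bar>u t\<bar>}" using n by auto
        qed
      qed
    qed auto
    also have "\<dots> = (SUP n. emeasure lborel (B n))"
      unfolding UB[symmetric] by (rule SUP_emeasure_incseq[symmetric, OF _ Binc]) auto
    also have "\<dots> = (SUP n. emeasure lborel (A n))" using AB by simp
    finally show ?thesis unfolding distf_def A_def by simp
  qed
  have incf: "incseq (\<lambda>n l. indicator {0<..} l * Phi (distf (U n) l))"
    unfolding incseq_def le_fun_def
    by (auto intro!: mult_left_mono Phi_mono inc)
  have "Ch u = (\<integral>\<^sup>+l. (SUP n. indicator {0<..} l * Phi (distf (U n) l)) \<partial>lborel)"
    unfolding Ch_def
  proof (rule nn_integral_cong)
    fix l :: real
    have "Phi (distf u l) = (SUP n. Phi (distf (U n) l))"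
      unfolding sup by (rule Phi_SUP) (auto simp: incseq_def inc)
    then show "indicator {0<..} l * Phi (distf u l) = (SUP n. indicator {0<..} l * Phi (distf (U n) l))"
      by (simp add: SUP_mult_left_ennreal)
  qed
  also have "\<dots> = (SUP n. Ch (U n))"
    unfolding Ch_def by (rule nn_integral_monotone_convergence_SUP[OF incf]) measurable
  finally have "Ch u = (SUP n. Ch (U n))" .
  moreover have "incseq (\<lambda>n. Ch (U n))"
    unfolding Ch_def incseq_def by (auto intro!: nn_integral_mono mult_left_mono Phi_mono inc)
  ultimately show ?thesis using LIMSEQ_SUP by simp
qed

end

definition Ms :: "real \<Rightarrow> (real \<Rightarrow> real) \<Rightarrow> ennreal" where
  "Ms s u = (\<integral>\<^sup>+l. indicator {0<..} l * min (distf u l) (ennreal s) \<partial>lborel)"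

definition Tail :: "real \<Rightarrow> (real \<Rightarrow> real) \<Rightarrow> ennreal" where
  "Tail a u = (\<integral>\<^sup>+l. indicator {a<..} l * distf u l \<partial>lborel)"

lemma distf_measurable[measurable]:
  assumes [measurable]: "u \<in> borel_measurable borel"
  shows "(\<lambda>l. distf u l) \<in> borel_measurable borel"
  by (rule antimono_borel_measurable) (intro distf_antimono assms)

lemma min_distf_measurable[measurable]:
  assumes [measurable]: "u \<in> borel_measurable borel"
  shows "(\<lambda>l. min (distf u l) c) \<in> borel_measurable borel"
  by (rule antimono_borel_measurable) (intro min.mono distf_antimono assms order_refl)

lemma Tail_eq:
  assumes u[measurable]: "u \<in> borel_measurable borel" and a: "0 \<le> a"
  shows "Tail a u = (\<integral>\<^sup>+t. indicator {0<..} t * ennreal (\<bar>u t\<bar> - a) \<partial>lborel)"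
proof -
  define h where "h t = indicator {0<..} t * ennreal (\<bar>u t\<bar> - a)" for t
  have [measurable]: "h \<in> borel_measurable lborel" unfolding h_def by measurable
  have "(\<integral>\<^sup>+t. h t \<partial>lborel) = (\<integral>\<^sup>+l. indicator {0<..} l * emeasure lborel {t\<in>space lborel. ennreal l < h t} \<partial>lborel)"
    by (rule layer_cake) (auto simp: lborel.sigma_finite_measure_axioms)
  also have "\<dots> = (\<integral>\<^sup>+l. indicator {0<..} l * distf u (a + l) \<partial>lborel)"
  proof (rule nn_integral_cong)
    fix l :: real
    show "indicator {0<..} l * emeasure lborel {t\<in>space lborel. ennreal l < h t} = indicator {0<..} l * distf u (a + l)"
    proof (cases "0 < l")
      case True
      have "{t\<in>space lborel. ennreal l < h t} = {t\<in>{0<..}. a + l < \<bar>u t\<bar>}"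
        using True by (auto simp: h_def ennreal_less_iff split: split_indicator)
      then show ?thesis by (simp add: distf_def)
    qed simp
  qed
  also have "\<dots> = (\<integral>\<^sup>+l. indicator {a<..} (a + 1 * l) * distf u (a + 1 * l) \<partial>lborel)"
    by (intro nn_integral_cong) (auto split: split_indicator)
  also have "\<dots> = Tail a u"
    unfolding Tail_def
    using nn_integral_real_affine[where c=1 and t=a and f="\<lambda>l. indicator {a<..} l * distf u l"] by simp
  finally show ?thesis unfolding h_def by simp
qed

lemma Ms_le:
  assumes u[measurable]: "u \<in> borel_measurable borel" and a: "0 \<le> a" and s: "0 \<le> s"
  shows "Ms s u \<le> ennreal (a * s) + Tail a u"
proof -
  have "Ms s u \<le> (\<integral>\<^sup>+l. ennreal s * indicator {0<..a} l + indicator {a<..} l * distf u l \<partial>lborel)"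
    unfolding Ms_def
    by (intro nn_integral_mono) (auto split: split_indicator)
  also have "\<dots> = ennreal s * emeasure lborel {0<..a} + Tail a u"
    unfolding Tail_def by (subst nn_integral_add) (auto simp: nn_integral_cmult)
  also have "\<dots> = ennreal (a * s) + Tail a u"
    using a s by (simp add: ennreal_mult'[symmetric] mult.commute)
  finally show ?thesis .
qed

lemma Ms_eq:
  assumes u[measurable]: "u \<in> borel_measurable borel" and s: "0 < s" and fin: "Ms s u < top"
  shows "\<exists>a\<ge>0. Ms s u = ennreal (a * s) + Tail a u"
proof -
  define S where "S = {l. 0 \<le> l \<and> distf u l \<le> ennreal s}"
  have "S \<noteq> {}"
  proof
    assume "S = {}"
    have "ennreal s < distf u l" if "0 < l" for l
    proof -
      have "l \<notin> S" using \<open>S = {}\<close> by simp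
      then show ?thesis using that unfolding S_def by (auto simp: not_le)
    qed
    then have "Ms s u = (\<integral>\<^sup>+l. ennreal s * indicator {0::real<..} l \<partial>lborel)"
      unfolding Ms_def by (intro nn_integral_cong) (auto split: split_indicator)
    also have "\<dots> = top"
      using s by (simp add: nn_integral_cmult lborel_Ioi_top ennreal_mult_top)
    finally show False using fin by simp
  qed
  have bdd: "bdd_below S" unfolding S_def by (intro bdd_belowI[of _ 0]) auto
  define a where "a = Inf S"
  have a0: "0 \<le> a" unfolding a_def using \<open>S \<noteq> {}\<close> by (intro cInf_greatest) (auto simp: S_def)
  have above: "distf u l \<le> ennreal s" if al: "a < l" for l
  proof -
    have "Inf S < l" using al unfolding a_def .
    then obtain l' where "l' \<in> S" "l' < l" using cInf_less_iff[OF \<open>S \<noteq> {}\<close> bdd] by auto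
    then show ?thesis unfolding S_def using distf_antimono[OF u, of l' l] by auto
  qed
  have below: "ennreal s < distf u l" if "0 < l" "l < a" for l
  proof (rule ccontr)
    assume "\<not> ennreal s < distf u l"
    then have "l \<in> S" using that unfolding S_def by (auto simp: not_less)
    then have "a \<le> l" unfolding a_def using bdd by (intro cInf_lower)
    then show False using that by simp
  qed
  have "Ms s u = (\<integral>\<^sup>+l. ennreal s * indicator {0<..a} l + indicator {a<..} l * distf u l \<partial>lborel)"
    unfolding Ms_def
  proof (rule nn_integral_cong_AE)
    show "AE l in lborel. indicator {0<..} l * min (distf u l) (ennreal s) = ennreal s * indicator {0<..a} l + indicator {a<..} l * distf u l"
      using AE_lborel_singleton[of a]
    proof eventually_elim
      case (elim l)
      show ?case
      proof (cases "0 < l")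
        case True
        show ?thesis
        proof (cases "l < a")
          case True
          then show ?thesis using below[of l] \<open>0 < l\<close> by (auto split: split_indicator)
        next
          case False
          then have "a < l" using elim by auto
          then show ?thesis using above[of l] a0 by (auto split: split_indicator simp: min_def)
        qed
      next
        case False
        then have "\<not> a < l" using a0 by auto
        then show ?thesis using False by (auto split: split_indicator)
      qed
    qed
  qed
  also have "\<dots> = ennreal s * emeasure lborel {0<..a} + Tail a u"
    unfolding Tail_def by (subst nn_integral_add) (auto simp: nn_integral_cmult)
  also have "\<dots> = ennreal (a * s) + Tail a u"
    using a0 s by (simp add: ennreal_mult'[symmetric] mult.commute)
  finally show ?thesis using a0 by blast
qed

lemma Ms_subadd:
  assumes u[measurable]: "u \<in> borel_measurable borel" and v[measurable]: "v \<in> borel_measurable borel"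
    and s: "0 < s"
  shows "Ms s (\<lambda>t. u t + v t) \<le> Ms s u + Ms s v"
proof (cases "Ms s u < top \<and> Ms s v < top")
  case False
  then show ?thesis by (auto simp: less_top[symmetric])
next
  case True
  obtain a where a: "0 \<le> a" "Ms s u = ennreal (a * s) + Tail a u"
    using Ms_eq[OF u s] True by auto
  obtain b where b: "0 \<le> b" "Ms s v = ennreal (b * s) + Tail b v"
    using Ms_eq[OF v s] True by auto
  have "Ms s (\<lambda>t. u t + v t) \<le> ennreal ((a + b) * s) + Tail (a + b) (\<lambda>t. u t + v t)"
    using a b s by (intro Ms_le) auto
  also have "Tail (a + b) (\<lambda>t. u t + v t) \<le> Tail a u + Tail b v"
  proof -
    have "Tail (a + b) (\<lambda>t. u t + v t) = (\<integral>\<^sup>+t. indicator {0<..} t * ennreal (\<bar>u t + v t\<bar> - (a + b)) \<partial>lborel)"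
      using a b by (intro Tail_eq) auto
    also have "\<dots> \<le> (\<integral>\<^sup>+t. indicator {0<..} t * ennreal (\<bar>u t\<bar> - a) + indicator {0<..} t * ennreal (\<bar>v t\<bar> - b) \<partial>lborel)"
    proof (intro nn_integral_mono)
      fix t
      have "ennreal (\<bar>u t + v t\<bar> - (a + b)) \<le> ennreal (max 0 (\<bar>u t\<bar> - a) + max 0 (\<bar>v t\<bar> - b))"
        by (intro ennreal_leI) auto
      also have "\<dots> = ennreal (\<bar>u t\<bar> - a) + ennreal (\<bar>v t\<bar> - b)"
        by (subst ennreal_plus) (auto simp: ennreal_max_0)
      finally show "indicator {0<..} t * ennreal (\<bar>u t + v t\<bar> - (a + b)) \<le> indicator {0<..} t * ennreal (\<bar>u t\<bar> - a) + indicator {0<..} t * ennreal (\<bar>v t\<bar> - b)"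
        by (auto split: split_indicator)
    qed
    also have "\<dots> = Tail a u + Tail b v"
      using a b by (subst nn_integral_add) (auto simp: Tail_eq)
    finally show ?thesis .
  qed
  finally have "Ms s (\<lambda>t. u t + v t) \<le> ennreal ((a + b) * s) + (Tail a u + Tail b v)"
    by (simp add: add_left_mono)
  also have "\<dots> = Ms s u + Ms s v"
    using a b s by (simp add: distrib_right ennreal_plus[symmetric] add_ac del: ennreal_plus)
  finally show ?thesis .
qed

lemma abel_identity:
  fixes \<sigma> m :: "nat \<Rightarrow> real"
  assumes "m 0 = 0"
  shows "(\<Sum>k<N. \<sigma> k * (m (Suc k) - m k)) = (\<Sum>k<N. (\<sigma> k - \<sigma> (Suc k)) * m (Suc k)) + \<sigma> N * m N"
proof (induction N)
  case 0 then show ?case using assms by simp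
next
  case (Suc N)
  then show ?case by (simp add: algebra_simps)
qed

context lor
begin

lemma phi_scale:
  assumes t: "0 < t" "t \<le> 1" and y: "0 < y"
  shows "t * \<phi> y \<le> \<phi> (t * y)"
proof -
  have "isCont \<phi> (t * y)"
    using phi_cont t y by (simp add: continuous_on_eq_continuous_at)
  moreover have "((\<lambda>e. (1 - t) * e + t * y) \<longlongrightarrow> (1 - t) * 0 + t * y) (at_right 0)"
    by (intro tendsto_intros)
  ultimately have l1: "((\<lambda>e. \<phi> ((1 - t) * e + t * y)) \<longlongrightarrow> \<phi> (t * y)) (at_right 0)"
    using isCont_tendsto_compose by fastforce
  have l2: "((\<lambda>e. (1 - t) * \<phi> e + t * \<phi> y) \<longlongrightarrow> (1 - t) * 0 + t * \<phi> y) (at_right 0)"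
    by (intro tendsto_intros lim0)
  have ineq: "(1 - t) * \<phi> e + t * \<phi> y \<le> \<phi> ((1 - t) * e + t * y)" if "0 < e" for e
    using concave_onD[OF conc, of t e y] t y that by (simp add: algebra_simps)
  have ev: "\<forall>\<^sub>F e in at_right 0. (1 - t) * \<phi> e + t * \<phi> y \<le> \<phi> ((1 - t) * e + t * y)"
    unfolding eventually_at_right_field using ineq by (intro exI[of _ 1]) auto
  have "(1 - t) * 0 + t * \<phi> y \<le> \<phi> (t * y)"
    by (rule tendsto_le[OF _ l1 l2 ev]) simp
  then show ?thesis by simp
qed

lemma F_concave: "concave_on {0..} F"
proof (rule concave_on_linorderI)
  fix t x y :: real assume t: "0 < t" "t < 1" and x: "x \<in> {0..}" and y: "y \<in> {0..}" and xy: "x < y"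
  then have y0: "0 < y" by auto
  show "(1 - t) * F x + t * F y \<le> F ((1 - t) *\<^sub>R x + t *\<^sub>R y)"
  proof (cases "x = 0")
    case True
    have ty: "0 < t * y" using t y0 by simp
    have e1: "F ((1 - t) *\<^sub>R x + t *\<^sub>R y) = \<phi> (t * y)"
      using True ty unfolding F_def by (simp add: not_le[symmetric])
    have e2: "F x = 0" "F y = \<phi> y" using True y0 by (auto simp: F_def)
    show ?thesis unfolding e1 e2 using phi_scale[of t y] t y0 by simp
  next
    case False
    then have "0 < x" using x by auto
    moreover have "0 < (1 - t) * x + t * y" using t \<open>0 < x\<close> y0 by (intro add_pos_pos) auto
    ultimately show ?thesis
      using concave_onD[OF conc, of t x y] t x y y0 by (simp add: F_def)
  qed
qed simp

lemma F_chord: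
  assumes "0 \<le> a" "a < c" "a \<le> b" "b \<le> c"
  shows "(F c - F a) / (c - a) * (b - a) + F a \<le> F b"
proof -
  have "concave_on {a..c} F"
    using F_concave unfolding concave_on_def by (rule convex_on_subset) (use assms in auto)
  from concave_onD_Icc'[OF this, of b] assms show ?thesis by simp
qed

lemma F_mid:
  assumes "0 \<le> a" "0 \<le> h"
  shows "F a + F (a + 2 * h) \<le> 2 * F (a + h)"
proof -
  have "(1 - 1/2) * F a + 1/2 * F (a + 2 * h) \<le> F ((1 - 1/2) *\<^sub>R a + (1/2) *\<^sub>R (a + 2 * h))"
    using assms by (intro concave_onD[OF F_concave]) auto
  also have "(1 - 1/2) *\<^sub>R a + (1/2) *\<^sub>R (a + 2 * h) = a + h" by (simp add: algebra_simps)
  finally show ?thesis by simp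
qed

definition hh :: "nat \<Rightarrow> real" where "hh n = 1 / real (Suc n)"
definition NN :: "nat \<Rightarrow> nat" where "NN n = (Suc n)^2"
definition gp :: "nat \<Rightarrow> nat \<Rightarrow> real" where "gp n k = real k * hh n"
definition sg :: "nat \<Rightarrow> nat \<Rightarrow> real" where "sg n k = (F (gp n (Suc k)) - F (gp n k)) / hh n"
definition Pr :: "nat \<Rightarrow> real \<Rightarrow> real" where
  "Pr n y = (\<Sum>k<NN n. sg n k * (min y (gp n (Suc k)) - min y (gp n k)))"

lemma hh_pos: "0 < hh n" by (simp add: hh_def)
lemma gp_nonneg: "0 \<le> gp n k" by (simp add: gp_def hh_def)
lemma gp_Suc: "gp n (Suc k) = gp n k + hh n" by (simp add: gp_def algebra_simps)
lemma gp_mono: "k \<le> j \<Longrightarrow> gp n k \<le> gp n j" by (simp add: gp_def hh_def divide_right_mono)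
lemma gp_0[simp]: "gp n 0 = 0" by (simp add: gp_def)
lemma gp_NN: "gp n (NN n) = real (Suc n)"
proof -
  have "real (Suc n) * real (Suc n) * (1 / real (Suc n)) = real (Suc n)" by simp
  then show ?thesis unfolding gp_def hh_def NN_def by (simp only: of_nat_power power2_eq_square of_nat_mult)
qed

lemma sg_nonneg: "0 \<le> sg n k"
  unfolding sg_def using hh_pos[of n] F_mono[OF gp_mono[of k "Suc k" n]] by (intro divide_nonneg_pos) auto

lemma sg_antimono: "sg n (Suc k) \<le> sg n k"
proof -
  have "F (gp n k) + F (gp n k + 2 * hh n) \<le> 2 * F (gp n k + hh n)"
    using gp_nonneg hh_pos by (intro F_mid) (auto intro: less_imp_le)
  then show ?thesis
    unfolding sg_def using hh_pos[of n]
    by (simp add: gp_Suc divide_right_mono algebra_simps)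
qed

lemma Pr_abel:
  "Pr n y = (\<Sum>k<NN n. (sg n k - sg n (Suc k)) * min y (gp n (Suc k))) + sg n (NN n) * min y (gp n (NN n))"
  if "0 \<le> y"
  unfolding Pr_def using that by (intro abel_identity) simp

lemma Pr_term_le:
  assumes y: "0 \<le> y"
  shows "sg n k * (min y (gp n (Suc k)) - min y (gp n k)) \<le> F (min y (gp n (Suc k))) - F (min y (gp n k))"
proof -
  have h: "0 < hh n" by (rule hh_pos)
  consider "y \<le> gp n k" | "gp n (Suc k) \<le> y" | "gp n k < y" "y < gp n (Suc k)" by linarith
  then show ?thesis
  proof cases
    case 1
    then have "y \<le> gp n (Suc k)" using gp_mono[of k "Suc k" n] by simp
    then show ?thesis using 1 by simp
  next
    case 2
    then have "gp n k \<le> y" using gp_mono[of k "Suc k" n] by simp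
    then show ?thesis using 2 h by (simp add: sg_def gp_Suc)
  next
    case 3
    have "(F (gp n (Suc k)) - F (gp n k)) / (gp n (Suc k) - gp n k) * (y - gp n k) + F (gp n k) \<le> F y"
      using 3 gp_nonneg by (intro F_chord) auto
    then show ?thesis using 3 h by (simp add: sg_def gp_Suc algebra_simps)
  qed
qed

lemma Pr_le:
  assumes y: "0 \<le> y" shows "Pr n y \<le> F y"
proof -
  have "Pr n y \<le> (\<Sum>k<NN n. F (min y (gp n (Suc k))) - F (min y (gp n k)))"
    unfolding Pr_def by (intro sum_mono Pr_term_le y)
  also have "\<dots> = F (min y (gp n (NN n))) - F (min y (gp n 0))"
    by (rule sum_lessThan_telescope)
  also have "\<dots> \<le> F y"
  proof -
    have "F (min y (gp n (NN n))) \<le> F y" by (rule F_mono) simp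
    moreover have "min y (gp n 0) = 0" using y by simp
    ultimately show ?thesis by (simp add: F_def)
  qed
  finally show ?thesis .
qed

lemma Pr_ge:
  assumes y: "0 \<le> y" and J: "J \<le> NN n" "gp n J \<le> y"
  shows "F (gp n J) \<le> Pr n y"
proof -
  have "(\<Sum>k<NN n. if k < J then F (gp n (Suc k)) - F (gp n k) else 0) \<le> Pr n y"
    unfolding Pr_def
  proof (intro sum_mono)
    fix k assume "k \<in> {..<NN n}"
    show "(if k < J then F (gp n (Suc k)) - F (gp n k) else 0) \<le> sg n k * (min y (gp n (Suc k)) - min y (gp n k))"
    proof (cases "k < J")
      case True
      then have "gp n (Suc k) \<le> y" using gp_mono[of "Suc k" J n] J by simp
      moreover have "gp n k \<le> y" using calculation gp_mono[of k "Suc k" n] by simp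
      ultimately show ?thesis using True hh_pos[of n] by (simp add: sg_def gp_Suc)
    next
      case False
      have "min y (gp n k) \<le> min y (gp n (Suc k))" using gp_mono[of k "Suc k" n] by simp
      then show ?thesis using False sg_nonneg[of n k] by simp
    qed
  qed
  moreover have "(\<Sum>k<NN n. if k < J then F (gp n (Suc k)) - F (gp n k) else 0) = (\<Sum>k<J. F (gp n (Suc k)) - F (gp n k))"
  proof -
    have "(\<Sum>k<NN n. if k < J then F (gp n (Suc k)) - F (gp n k) else 0) = (\<Sum>k\<in>{..<NN n} \<inter> {k. k < J}. F (gp n (Suc k)) - F (gp n k))"
      by (simp add: sum.inter_restrict)
    also have "{..<NN n} \<inter> {k. k < J} = {..<J}" using J by auto
    finally show ?thesis .
  qed
  moreover have "(\<Sum>k<J. F (gp n (Suc k)) - F (gp n k)) = F (gp n J)"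
    by (subst sum_lessThan_telescope) (simp add: F_def)
  ultimately show ?thesis by simp
qed

definition Pe :: "nat \<Rightarrow> ennreal \<Rightarrow> ennreal" where
  "Pe n x = (\<Sum>k<NN n. ennreal (sg n k - sg n (Suc k)) * min x (ennreal (gp n (Suc k))))
      + ennreal (sg n (NN n)) * min x (ennreal (gp n (NN n)))"

lemma min_enn_eq:
  assumes "0 \<le> g" "g \<le> G" "0 \<le> G"
  shows "min x (ennreal g) = ennreal (min (enn2real (min x (ennreal G))) g)"
proof (cases x rule: enn_cases)
  case top then show ?thesis using assms by simp
next
  case (fin a)
  then show ?thesis using assms by (auto simp: min_def ennreal_le_iff)
qed

lemma Pe_eq: "Pe n x = ennreal (Pr n (enn2real (min x (ennreal (gp n (NN n))))))"
proof -
  define y where "y = enn2real (min x (ennreal (gp n (NN n))))"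
  have y0: "0 \<le> y" unfolding y_def by simp
  have G: "0 \<le> gp n (NN n)" by (rule gp_nonneg)
  have m: "min x (ennreal (gp n k)) = ennreal (min y (gp n k))" if "k \<le> NN n" for k
    unfolding y_def using gp_nonneg gp_mono[OF that] G by (intro min_enn_eq) auto
  have c: "0 \<le> sg n k - sg n (Suc k)" for k using sg_antimono[of n k] by simp
  have "Pe n x = (\<Sum>k<NN n. ennreal ((sg n k - sg n (Suc k)) * min y (gp n (Suc k))))
      + ennreal (sg n (NN n) * min y (gp n (NN n)))"
    unfolding Pe_def using m c y0 gp_nonneg sg_nonneg
    by (intro arg_cong2[where f="(+)"] sum.cong) (auto simp: ennreal_mult Suc_le_eq)
  also have "\<dots> = ennreal ((\<Sum>k<NN n. (sg n k - sg n (Suc k)) * min y (gp n (Suc k))) + sg n (NN n) * min y (gp n (NN n)))"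
    using c y0 gp_nonneg sg_nonneg
    by (subst sum_ennreal) (auto intro!: sum_nonneg ennreal_plus[symmetric])
  also have "\<dots> = ennreal (Pr n y)"
    using Pr_abel[OF y0] by simp
  finally show ?thesis unfolding y_def .
qed

lemma Pe_le_Phi: "Pe n x \<le> Phi x"
proof -
  define y where "y = enn2real (min x (ennreal (gp n (NN n))))"
  have y0: "0 \<le> y" unfolding y_def by simp
  have ey: "ennreal y = min x (ennreal (gp n (NN n)))"
    unfolding y_def by (cases x rule: enn_cases) (auto simp: min_def top_unique)
  have "Pe n x = ennreal (Pr n y)" unfolding y_def by (rule Pe_eq)
  also have "\<dots> \<le> ennreal (F y)" using Pr_le[OF y0] by (rule ennreal_leI)
  also have "\<dots> = Phi (ennreal y)" using Phi_ennreal[OF y0] by simp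
  also have "\<dots> \<le> Phi x" unfolding ey by (intro Phi_mono) simp
  finally show ?thesis .
qed

lemma Phi_le_liminf: "Phi x \<le> liminf (\<lambda>n. Pe n x)"
proof (cases x rule: enn_cases)
  case top
  have inc: "incseq (\<lambda>n. ennreal (F (real n)))"
    unfolding incseq_def by (auto intro!: ennreal_leI F_mono)
  have lim: "(\<lambda>n. ennreal (F (real n))) \<longlonglongrightarrow> Phi top"
    unfolding Phi_top by (rule LIMSEQ_SUP[OF inc])
  have le: "ennreal (F (real n)) \<le> Pe n x" for n
  proof -
    have "Pe n x = ennreal (Pr n (gp n (NN n)))"
      using Pe_eq[of n x] top gp_nonneg by simp
    moreover have "F (gp n (NN n)) \<le> Pr n (gp n (NN n))"
      using gp_nonneg by (intro Pr_ge) auto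
    moreover have "F (real n) \<le> F (gp n (NN n))" unfolding gp_NN by (intro F_mono) simp
    ultimately show ?thesis by (auto intro!: ennreal_leI)
  qed
  have "Phi x = liminf (\<lambda>n. ennreal (F (real n)))"
    using lim top by (simp add: lim_imp_Liminf)
  also have "\<dots> \<le> liminf (\<lambda>n. Pe n x)"
    using le by (intro Liminf_mono) auto
  finally show ?thesis .
next
  case (fin a)
  show ?thesis
  proof (cases "a = 0")
    case True then show ?thesis using fin by simp
  next
    case False
    then have a: "0 < a" using fin by simp
    have "(\<lambda>n. a - hh n) \<longlonglongrightarrow> a - 0"
      unfolding hh_def by (intro tendsto_intros LIMSEQ_inverse_real_of_nat[unfolded inverse_eq_divide]) 
    then have "(\<lambda>n. F (a - hh n)) \<longlonglongrightarrow> F a"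
      using F_isCont isCont_tendsto_compose by fastforce
    then have lim: "(\<lambda>n. ennreal (F (a - hh n))) \<longlonglongrightarrow> Phi x"
      using fin Phi_ennreal by (auto intro: tendsto_ennrealI)
    obtain N0 :: nat where N0: "a \<le> real N0" using real_arch_simple by blast
    have le: "ennreal (F (a - hh n)) \<le> Pe n x" if n: "N0 \<le> n" for n
    proof -
      have aG: "a \<le> gp n (NN n)" unfolding gp_NN using N0 n by simp
      have y: "enn2real (min x (ennreal (gp n (NN n)))) = a"
        using fin aG gp_nonneg by (simp add: min_def)
      define z where "z = a * real (Suc n)"
      have z0: "0 \<le> z" using a by (simp add: z_def)
      define J where "J = nat \<lfloor>z\<rfloor>"
      have J1: "real J \<le> z" unfolding J_def using z0 by simp
      have J2: "z - 1 < real J" unfolding J_def using z0 by linarith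
      have gpJ: "gp n J = real J / real (Suc n)" by (simp add: gp_def hh_def)
      have "gp n J \<le> a" unfolding gpJ using J1 by (simp add: z_def field_simps)
      moreover have "J \<le> NN n"
      proof -
        have "real J \<le> real (Suc n) * real (Suc n)"
          using J1 aG unfolding z_def gp_NN by (intro order_trans[OF J1]) (simp add: z_def mult_right_mono)
        then show ?thesis unfolding NN_def power2_eq_square by (simp only: of_nat_mult[symmetric] of_nat_le_iff)
      qed
      moreover have "a - hh n \<le> gp n J"
      proof -
        have "(z - 1) / real (Suc n) \<le> real J / real (Suc n)" using J2 by (intro divide_right_mono) auto
        moreover have "(z - 1) / real (Suc n) = a - hh n"
          by (simp add: z_def hh_def diff_divide_distrib del: of_nat_Suc)
        ultimately show ?thesis unfolding gpJ by simp
      qed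
      ultimately have "F (a - hh n) \<le> Pr n a"
        using a by (intro order_trans[OF F_mono Pr_ge]) auto
      then show ?thesis using Pe_eq[of n x] y by (auto intro: ennreal_leI)
    qed
    have "Phi x = liminf (\<lambda>n. ennreal (F (a - hh n)))"
      using lim by (simp add: lim_imp_Liminf)
    also have "\<dots> \<le> liminf (\<lambda>n. Pe n x)"
      using le by (intro Liminf_mono) (auto simp: eventually_sequentially)
    finally show ?thesis .
  qed
qed

definition Chn :: "nat \<Rightarrow> (real \<Rightarrow> real) \<Rightarrow> ennreal" where
  "Chn n w = (\<integral>\<^sup>+l. indicator {0<..} l * Pe n (distf w l) \<partial>lborel)"

lemma Pe_distf_measurable[measurable]:
  assumes [measurable]: "w \<in> borel_measurable borel"
  shows "(\<lambda>l. indicator {0<..} l * Pe n (distf w l)) \<in> borel_measurable borel"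
  unfolding Pe_def by measurable

lemma Chn_eq:
  assumes [measurable]: "w \<in> borel_measurable borel"
  shows "Chn n w = (\<Sum>k<NN n. ennreal (sg n k - sg n (Suc k)) * Ms (gp n (Suc k)) w)
      + ennreal (sg n (NN n)) * Ms (gp n (NN n)) w"
proof -
  have "Chn n w = (\<integral>\<^sup>+l. (\<Sum>k<NN n. ennreal (sg n k - sg n (Suc k)) * (indicator {0<..} l * min (distf w l) (ennreal (gp n (Suc k)))))
      + ennreal (sg n (NN n)) * (indicator {0<..} l * min (distf w l) (ennreal (gp n (NN n)))) \<partial>lborel)"
    unfolding Chn_def Pe_def
    by (intro nn_integral_cong) (simp add: sum_distrib_left distrib_left ac_simps)
  also have "\<dots> = (\<integral>\<^sup>+l. (\<Sum>k<NN n. ennreal (sg n k - sg n (Suc k)) * (indicator {0<..} l * min (distf w l) (ennreal (gp n (Suc k))))) \<partial>lborel)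
      + (\<integral>\<^sup>+l. ennreal (sg n (NN n)) * (indicator {0<..} l * min (distf w l) (ennreal (gp n (NN n)))) \<partial>lborel)"
    by (rule nn_integral_add) measurable
  also have "\<dots> = (\<Sum>k<NN n. ennreal (sg n k - sg n (Suc k)) * Ms (gp n (Suc k)) w)
      + ennreal (sg n (NN n)) * Ms (gp n (NN n)) w"
    unfolding Ms_def
    by (subst nn_integral_sum) (auto simp: nn_integral_cmult)
  finally show ?thesis .
qed

lemma gp_pos: "0 < k \<Longrightarrow> 0 < gp n k" by (simp add: gp_def hh_def)

lemma Chn_subadd:
  assumes [measurable]: "u \<in> borel_measurable borel" "v \<in> borel_measurable borel"
  shows "Chn n (\<lambda>t. u t + v t) \<le> Chn n u + Chn n v"
proof -
  have NN: "0 < NN n" by (simp add: NN_def)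
  have "Chn n (\<lambda>t. u t + v t) \<le> (\<Sum>k<NN n. ennreal (sg n k - sg n (Suc k)) * (Ms (gp n (Suc k)) u + Ms (gp n (Suc k)) v))
      + ennreal (sg n (NN n)) * (Ms (gp n (NN n)) u + Ms (gp n (NN n)) v)"
    unfolding Chn_eq[OF borel_measurable_add[OF assms]]
    by (intro add_mono sum_mono mult_left_mono Ms_subadd assms gp_pos NN) auto
  also have "\<dots> = Chn n u + Chn n v"
    unfolding Chn_eq[OF assms(1)] Chn_eq[OF assms(2)]
    by (simp add: distrib_left sum.distrib ac_simps)
  finally show ?thesis .
qed

lemma Chn_le_Ch: "Chn n w \<le> Ch w"
  unfolding Chn_def Ch_def by (intro nn_integral_mono mult_left_mono Pe_le_Phi) auto

lemma Ch_le_liminf: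
  assumes [measurable]: "w \<in> borel_measurable borel"
  shows "Ch w \<le> liminf (\<lambda>n. Chn n w)"
proof -
  have "Ch w \<le> (\<integral>\<^sup>+l. liminf (\<lambda>n. indicator {0<..} l * Pe n (distf w l)) \<partial>lborel)"
    unfolding Ch_def
  proof (intro nn_integral_mono)
    fix l :: real
    show "indicator {0<..} l * Phi (distf w l) \<le> liminf (\<lambda>n. indicator {0<..} l * Pe n (distf w l))"
      by (cases "0 < l") (simp_all add: Phi_le_liminf)
  qed
  also have "\<dots> \<le> liminf (\<lambda>n. Chn n w)"
    unfolding Chn_def by (rule nn_integral_liminf) measurable
  finally show ?thesis .
qed

lemma Ch_subadd:
  assumes [measurable]: "u \<in> borel_measurable borel" "v \<in> borel_measurable borel"
  shows "Ch (\<lambda>t. u t + v t) \<le> Ch u + Ch v"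
proof -
  have "Ch (\<lambda>t. u t + v t) \<le> liminf (\<lambda>n. Chn n (\<lambda>t. u t + v t))"
    by (rule Ch_le_liminf) measurable
  also have "\<dots> \<le> limsup (\<lambda>n. Chn n (\<lambda>t. u t + v t))"
    by (rule Liminf_le_Limsup) simp
  also have "\<dots> \<le> Ch u + Ch v"
  proof (rule Limsup_bounded, rule always_eventually, rule allI)
    fix n
    show "Chn n (\<lambda>t. u t + v t) \<le> Ch u + Ch v"
      using Chn_subadd[OF assms, of n] Chn_le_Ch[of n u] Chn_le_Ch[of n v]
      by (meson add_mono order_trans)
  qed
  finally show ?thesis .
qed

end

lemma conv_ineq:
  fixes x y \<alpha> r :: real
  assumes r: "1 \<le> r" and a: "0 < \<alpha>" "\<alpha> < 1" and x: "0 \<le> x" and y: "0 \<le> y"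
  shows "(x + y) powr r \<le> \<alpha> powr (1 - r) * x powr r + (1 - \<alpha>) powr (1 - r) * y powr r"
proof -
  have ge1: "1 \<le> c powr (1 - r)" if "0 < c" "c < 1" for c :: real
  proof -
    have "1 \<le> (1 / c) powr (r - 1)" using that r by (intro ge_one_powr_ge_zero) auto
    also have "(1 / c) powr (r - 1) = c powr (1 - r)"
      using that by (simp add: powr_divide powr_minus_divide[symmetric] powr_minus)
    finally show ?thesis .
  qed
  consider "x = 0" | "y = 0" | "0 < x" "0 < y" using x y by linarith
  then show ?thesis
  proof cases
    case 1
    have "1 \<le> (1 - \<alpha>) powr (1 - r)" using ge1[of "1 - \<alpha>"] a by auto
    then have "1 * y powr r \<le> (1 - \<alpha>) powr (1 - r) * y powr r"
      by (intro mult_right_mono) auto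
    then have "y powr r \<le> (1 - \<alpha>) powr (1 - r) * y powr r" by simp
    then show ?thesis using 1 by simp
  next
    case 2
    have "1 \<le> \<alpha> powr (1 - r)" using ge1[of "\<alpha>"] a by auto
    then have "1 * x powr r \<le> \<alpha> powr (1 - r) * x powr r"
      by (intro mult_right_mono) auto
    then have "x powr r \<le> \<alpha> powr (1 - r) * x powr r" by simp
    then show ?thesis using 2 by simp
  next
    case 3
    have "(\<lambda>x. x powr r) ((1 - (1 - \<alpha>)) *\<^sub>R (x / \<alpha>) + (1 - \<alpha>) *\<^sub>R (y / (1 - \<alpha>)))
        \<le> (1 - (1 - \<alpha>)) * (x / \<alpha>) powr r + (1 - \<alpha>) * (y / (1 - \<alpha>)) powr r"
      using 3 a by (intro convex_onD[OF powr_convex[OF r]]) auto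
    moreover have "(1 - (1 - \<alpha>)) *\<^sub>R (x / \<alpha>) + (1 - \<alpha>) *\<^sub>R (y / (1 - \<alpha>)) = x + y"
      using a by simp
    moreover have "\<alpha> * (x / \<alpha>) powr r = \<alpha> powr (1 - r) * x powr r"
      using a 3 by (simp add: powr_divide powr_diff)
    moreover have "(1 - \<alpha>) * (y / (1 - \<alpha>)) powr r = (1 - \<alpha>) powr (1 - r) * y powr r"
      using a 3 by (simp add: powr_divide powr_diff)
    ultimately show ?thesis by simp
  qed
qed

lemma conv_alg:
  fixes a b r :: real
  assumes a: "0 < a" and b: "0 < b"
  shows "(a / (a + b)) powr (1 - r) * a powr r + (1 - a / (a + b)) powr (1 - r) * b powr r = (a + b) powr r"
proof -
  have e: "1 - a / (a + b) = b / (a + b)" using a b by (simp add: field_simps)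
  have "(a / (a + b)) powr (1 - r) * a powr r = a / (a + b) powr (1 - r)"
    using a b by (simp add: powr_divide powr_add[symmetric])
  moreover have "(b / (a + b)) powr (1 - r) * b powr r = b / (a + b) powr (1 - r)"
    using a b by (simp add: powr_divide powr_add[symmetric])
  moreover have "a / (a + b) powr (1 - r) + b / (a + b) powr (1 - r) = (a + b) powr r"
  proof -
    have "a / (a + b) powr (1 - r) + b / (a + b) powr (1 - r) = (a + b) / (a + b) powr (1 - r)"
      by (simp add: add_divide_distrib)
    also have "\<dots> = (a + b) powr 1 / (a + b) powr (1 - r)" using a b by simp
    also have "\<dots> = (a + b) powr (1 - (1 - r))" by (rule powr_diff[symmetric])
    finally show ?thesis by simp
  qed
  ultimately show ?thesis unfolding e by simp
qed

lemma young_simple: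
  fixes x p r :: real
  assumes x: "0 \<le> x" and p: "0 < p" and r: "1 \<le> r"
  shows "x \<le> p powr (1 - r) * x powr r + p"
proof (cases "x \<le> p")
  case True
  then show ?thesis using p by (simp add: add_increasing)
next
  case False
  then have xp: "p < x" by simp
  have "x powr (r - 1) \<ge> p powr (r - 1)" using xp p r by (intro powr_mono2) auto
  then have "p powr (1 - r) * x powr (r - 1) \<ge> p powr (1 - r) * p powr (r - 1)"
    by (intro mult_left_mono) auto
  also have "p powr (1 - r) * p powr (r - 1) = 1" using p by (simp add: powr_add[symmetric])
  finally have "1 \<le> p powr (1 - r) * x powr (r - 1)" .
  then have "x * 1 \<le> x * (p powr (1 - r) * x powr (r - 1))" using x by (intro mult_left_mono) auto
  also have "x * (p powr (1 - r) * x powr (r - 1)) = p powr (1 - r) * x powr r"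
    using xp p by (simp add: powr_add[symmetric] algebra_simps powr_mult_base)
  finally show ?thesis using p by simp
qed

locale lorr = lor +
  fixes r :: real
  assumes r1: "1 \<le> r"
begin

lemma r0: "0 < r" using r1 by simp

lemma rho_eq:
  assumes [measurable]: "f \<in> borel_measurable borel"
  shows "lorentz_norm \<phi> r f = epow (Ch (\<lambda>t. \<bar>f t\<bar> powr r)) (1/r)"
  unfolding lorentz_norm_def using L_eq_Ch[OF assms r0] by simp

lemma absf_powr_measurable[measurable]:
  assumes [measurable]: "f \<in> borel_measurable borel"
  shows "(\<lambda>t. \<bar>f t\<bar> powr r) \<in> borel_measurable borel"
  by measurable

lemma ax_zero:
  assumes [measurable]: "f \<in> borel_measurable borel"
  shows "lorentz_norm \<phi> r f = 0 \<longleftrightarrow> (AE t in lborel. 0 < t \<longrightarrow> f t = 0)"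
proof -
  have "lorentz_norm \<phi> r f = 0 \<longleftrightarrow> Ch (\<lambda>t. \<bar>f t\<bar> powr r) = 0"
    unfolding rho_eq[OF assms] using r0 by (simp add: epow_eq_0_iff)
  also have "\<dots> \<longleftrightarrow> (AE t in lborel. 0 < t \<longrightarrow> \<bar>f t\<bar> powr r = 0)"
    using Ch_eq_0_imp[of "\<lambda>t. \<bar>f t\<bar> powr r"] Ch_zero_AE[of "\<lambda>t. \<bar>f t\<bar> powr r"] by auto
  also have "\<dots> \<longleftrightarrow> (AE t in lborel. 0 < t \<longrightarrow> f t = 0)"
    by (simp add: powr_eq_0_iff)
  finally show ?thesis .
qed

lemma ax_hom:
  assumes [measurable]: "f \<in> borel_measurable borel"
  shows "lorentz_norm \<phi> r (\<lambda>t. c * f t) = ennreal \<bar>c\<bar> * lorentz_norm \<phi> r f"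
proof (cases "c = 0")
  case True
  have "lorentz_norm \<phi> r (\<lambda>t. c * f t) = 0"
    using True by (subst ax_zero) auto
  then show ?thesis using True by simp
next
  case False
  have e: "(\<lambda>t. \<bar>c * f t\<bar> powr r) = (\<lambda>t. \<bar>c\<bar> powr r * \<bar>f t\<bar> powr r)"
    by (simp add: abs_mult powr_mult)
  have "lorentz_norm \<phi> r (\<lambda>t. c * f t) = epow (ennreal (\<bar>c\<bar> powr r) * Ch (\<lambda>t. \<bar>f t\<bar> powr r)) (1/r)"
    unfolding rho_eq[of "\<lambda>t. c * f t", OF borel_measurable_times[OF borel_measurable_const assms]] e
    using False by (subst Ch_cmult) auto
  also have "\<dots> = ennreal ((\<bar>c\<bar> powr r) powr (1/r)) * epow (Ch (\<lambda>t. \<bar>f t\<bar> powr r)) (1/r)"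
    using r0 by (intro epow_mult) auto
  also have "(\<bar>c\<bar> powr r) powr (1/r) = \<bar>c\<bar>" using r0 by (simp add: powr_powr)
  finally show ?thesis by (simp add: rho_eq)
qed

lemma ax_lattice:
  assumes [measurable]: "f \<in> borel_measurable borel" "g \<in> borel_measurable borel"
    and "AE t in lborel. 0 < t \<longrightarrow> \<bar>g t\<bar> \<le> \<bar>f t\<bar>"
  shows "lorentz_norm \<phi> r g \<le> lorentz_norm \<phi> r f"
proof -
  have "Ch (\<lambda>t. \<bar>g t\<bar> powr r) \<le> Ch (\<lambda>t. \<bar>f t\<bar> powr r)"
    using assms(3) r0
    by (intro Ch_mono_distf distf_mono_AE) (auto elim!: eventually_mono intro: powr_mono2)
  then show ?thesis unfolding rho_eq[OF assms(1)] rho_eq[OF assms(2)]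
    using r0 by (intro epow_mono) auto
qed

lemma ax_ri:
  assumes "\<And>y. 0 \<le> y \<Longrightarrow> distf f y = distf g y"
  shows "lorentz_norm \<phi> r f = lorentz_norm \<phi> r g"
proof -
  have "rearr f = rearr g"
    unfolding rearr_def[abs_def] using assms
    by (intro ext arg_cong[where f=Inf] image_cong refl) (auto intro!: Collect_cong)
  then show ?thesis unfolding lorentz_norm_def by simp
qed

lemma ax_fatou:
  assumes U[measurable]: "\<And>n. U n \<in> borel_measurable borel" and f[measurable]: "f \<in> borel_measurable borel"
    and AE: "AE t in lborel. 0 < t \<longrightarrow> incseq (\<lambda>n. \<bar>U n t\<bar>) \<and> (\<lambda>n. \<bar>U n t\<bar>) \<longlonglongrightarrow> \<bar>f t\<bar>"
  shows "(\<lambda>n. lorentz_norm \<phi> r (U n)) \<longlonglongrightarrow> lorentz_norm \<phi> r f"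
proof -
  have "(\<lambda>n. Ch (\<lambda>t. \<bar>U n t\<bar> powr r)) \<longlonglongrightarrow> Ch (\<lambda>t. \<bar>f t\<bar> powr r)"
  proof (rule Ch_incseq)
    show "AE t in lborel. 0 < t \<longrightarrow> incseq (\<lambda>n. \<bar>\<bar>U n t\<bar> powr r\<bar>) \<and> (\<lambda>n. \<bar>\<bar>U n t\<bar> powr r\<bar>) \<longlonglongrightarrow> \<bar>\<bar>f t\<bar> powr r\<bar>"
      using AE
    proof eventually_elim
      case (elim t)
      show ?case
      proof
        assume t: "0 < t"
        then have i: "incseq (\<lambda>n. \<bar>U n t\<bar>)" and c: "(\<lambda>n. \<bar>U n t\<bar>) \<longlonglongrightarrow> \<bar>f t\<bar>" using elim by auto
        have "incseq (\<lambda>n. \<bar>U n t\<bar> powr r)"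
          using i r0 unfolding incseq_def by (auto intro: powr_mono2)
        moreover have "(\<lambda>n. \<bar>U n t\<bar> powr r) \<longlonglongrightarrow> \<bar>f t\<bar> powr r"
          using c r0 by (intro tendsto_powr') auto
        ultimately show "incseq (\<lambda>n. \<bar>\<bar>U n t\<bar> powr r\<bar>) \<and> (\<lambda>n. \<bar>\<bar>U n t\<bar> powr r\<bar>) \<longlonglongrightarrow> \<bar>\<bar>f t\<bar> powr r\<bar>"
          by simp
      qed
    qed
  qed measurable
  then show ?thesis unfolding rho_eq[OF f] rho_eq[OF U] using r0
    by (intro epow_tendsto) auto
qed

lemma Ch_cong_distf:
  assumes "\<And>l. 0 < l \<Longrightarrow> distf u l = distf v l"
  shows "Ch u = Ch v"
  using assms by (intro antisym Ch_mono_distf) auto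

lemma Ch_epow:
  assumes [measurable]: "f \<in> borel_measurable borel"
  shows "Ch (\<lambda>t. \<bar>f t\<bar> powr r) = epow (lorentz_norm \<phi> r f) r"
  unfolding rho_eq[OF assms] using epow_epow[of "1/r"] r0 by simp

lemma ax_tri:
  assumes f[measurable]: "f \<in> borel_measurable borel" and g[measurable]: "g \<in> borel_measurable borel"
  shows "lorentz_norm \<phi> r (\<lambda>t. f t + g t) \<le> lorentz_norm \<phi> r f + lorentz_norm \<phi> r g"
proof -
  have fg[measurable]: "(\<lambda>t. f t + g t) \<in> borel_measurable borel" by measurable
  consider "lorentz_norm \<phi> r f = top \<or> lorentz_norm \<phi> r g = top"
    | "lorentz_norm \<phi> r f = 0" | "lorentz_norm \<phi> r g = 0"
    | a b where "lorentz_norm \<phi> r f = ennreal a" "0 < a" "lorentz_norm \<phi> r g = ennreal b" "0 < b"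
    by (metis enn_cases not_gr_zero ennreal_eq_0_iff ennreal_less_zero_iff order.not_eq_order_implies_strict)
  then show ?thesis
  proof cases
    case 1 then show ?thesis by auto
  next
    case 2
    then have "AE t in lborel. 0 < t \<longrightarrow> f t = 0" using ax_zero[OF f] by simp
    then have "lorentz_norm \<phi> r (\<lambda>t. f t + g t) = lorentz_norm \<phi> r g"
      unfolding rho_eq[OF fg] rho_eq[OF g]
      by (intro arg_cong[where f="\<lambda>x. epow x (1/r)"] Ch_cong_distf) (auto intro!: distf_cong_AE elim!: eventually_mono)
    then show ?thesis by simp
  next
    case 3
    then have "AE t in lborel. 0 < t \<longrightarrow> g t = 0" using ax_zero[OF g] by simp
    then have "lorentz_norm \<phi> r (\<lambda>t. f t + g t) = lorentz_norm \<phi> r f"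
      unfolding rho_eq[OF fg] rho_eq[OF f]
      by (intro arg_cong[where f="\<lambda>x. epow x (1/r)"] Ch_cong_distf) (auto intro!: distf_cong_AE elim!: eventually_mono)
    then show ?thesis by simp
  next
    case 4
    define \<alpha> where "\<alpha> = a / (a + b)"
    have \<alpha>: "0 < \<alpha>" "\<alpha> < 1" using 4 by (auto simp: \<alpha>_def field_simps)
    have A: "Ch (\<lambda>t. \<bar>f t\<bar> powr r) = ennreal (a powr r)"
      using Ch_epow[OF f] 4 by simp
    have B: "Ch (\<lambda>t. \<bar>g t\<bar> powr r) = ennreal (b powr r)"
      using Ch_epow[OF g] 4 by simp
    have p1: "0 < \<alpha> powr (1 - r)" "0 < (1 - \<alpha>) powr (1 - r)" using \<alpha> by auto
    have "Ch (\<lambda>t. \<bar>f t + g t\<bar> powr r) \<le> Ch (\<lambda>t. \<alpha> powr (1 - r) * \<bar>f t\<bar> powr r + (1 - \<alpha>) powr (1 - r) * \<bar>g t\<bar> powr r)"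
    proof (intro Ch_mono_distf distf_mono_AE always_eventually allI impI)
      fix t :: real
      have "\<bar>f t + g t\<bar> powr r \<le> (\<bar>f t\<bar> + \<bar>g t\<bar>) powr r"
        using r0 by (intro powr_mono2) auto
      also have "\<dots> \<le> \<alpha> powr (1 - r) * \<bar>f t\<bar> powr r + (1 - \<alpha>) powr (1 - r) * \<bar>g t\<bar> powr r"
        using \<alpha> r1 by (intro conv_ineq) auto
      finally show "\<bar>\<bar>f t + g t\<bar> powr r\<bar> \<le> \<bar>\<alpha> powr (1 - r) * \<bar>f t\<bar> powr r + (1 - \<alpha>) powr (1 - r) * \<bar>g t\<bar> powr r\<bar>"
        by simp
    qed measurable
    also have "\<dots> \<le> Ch (\<lambda>t. \<alpha> powr (1 - r) * \<bar>f t\<bar> powr r) + Ch (\<lambda>t. (1 - \<alpha>) powr (1 - r) * \<bar>g t\<bar> powr r)"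
      by (rule Ch_subadd) measurable
    also have "\<dots> = ennreal (\<alpha> powr (1 - r)) * ennreal (a powr r) + ennreal ((1 - \<alpha>) powr (1 - r)) * ennreal (b powr r)"
      using p1 by (simp add: Ch_cmult A B)
    also have "\<dots> = ennreal ((a + b) powr r)"
      using conv_alg[of a b r] 4 unfolding \<alpha>_def
      by (simp add: ennreal_mult[symmetric] ennreal_plus[symmetric] del: ennreal_plus)
    finally have le: "Ch (\<lambda>t. \<bar>f t + g t\<bar> powr r) \<le> ennreal ((a + b) powr r)" .
    have "lorentz_norm \<phi> r (\<lambda>t. f t + g t) \<le> epow (ennreal ((a + b) powr r)) (1/r)"
      unfolding rho_eq[OF fg] using r0 le by (intro epow_mono) auto
    also have "\<dots> = ennreal (a + b)" using 4 r0 by (simp add: powr_powr)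
    finally show ?thesis using 4 by simp
  qed
qed

lemma ax_ind:
  assumes [measurable]: "E \<in> sets borel" and E: "E \<subseteq> {0<..}" and fin: "emeasure lborel E < top"
  shows "lorentz_norm \<phi> r (indicator E) < top"
proof -
  have e: "(\<lambda>t. \<bar>indicator E t :: real\<bar> powr r) = indicator E"
    by (auto split: split_indicator)
  have "Ch (\<lambda>t. \<bar>indicator E t :: real\<bar> powr r) < top"
    unfolding e Ch_indicator[OF assms(1) E] by (rule Phi_less_top[OF fin])
  then show ?thesis unfolding rho_eq[OF borel_measurable_indicator[OF assms(1)]]
    using r0 by (simp add: epow_less_top_iff)
qed

lemma min_le_Phi:
  assumes a: "0 < a"
  shows "min (ennreal a) x \<le> ennreal (a / F a) * Phi x"
proof -
  have Fa: "0 < F a" using F_pos a by simp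
  have key: "ennreal a \<le> ennreal (a / F a) * Phi x" if "ennreal a \<le> x"
  proof -
    have "Phi (ennreal a) \<le> Phi x" using that by (rule Phi_mono)
    then have "ennreal (F a) \<le> Phi x" using Phi_ennreal[of a] a by simp
    then have "ennreal (a / F a) * ennreal (F a) \<le> ennreal (a / F a) * Phi x"
      by (rule mult_left_mono) simp
    also have "ennreal (a / F a) * ennreal (F a) = ennreal a"
      using Fa a by (simp add: ennreal_mult[symmetric])
    finally show ?thesis .
  qed
  show ?thesis
  proof (cases "ennreal a \<le> x")
    case True
    then show ?thesis using key by (simp add: min_def)
  next
    case False
    then have xa: "x < ennreal a" by simp
    then obtain b where b: "x = ennreal b" "0 \<le> b" "b < a"
      by (metis enn_cases ennreal_less_iff top.not_eq_extremum top_greatest not_le)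
    have "(F a - F 0) / (a - 0) * (b - 0) + F 0 \<le> F b"
      using b a by (intro F_chord) auto
    then have "F a / a * b \<le> F b" by (simp add: F_def)
    then have "b \<le> a / F a * F b" using a Fa by (simp add: field_simps)
    then have "ennreal b \<le> ennreal (a / F a) * ennreal (F b)"
      using a Fa F_nonneg by (simp add: ennreal_mult[symmetric] ennreal_leI)
    then show ?thesis using b xa Phi_ennreal[of b] by (simp add: min_def)
  qed
qed

lemma int_E_le_Ch:
  assumes [measurable]: "E \<in> sets borel" "u \<in> borel_measurable borel"
    and E: "E \<subseteq> {0<..}" and mE: "emeasure lborel E = ennreal a" and a: "0 < a"
  shows "(\<integral>\<^sup>+t\<in>E. ennreal \<bar>u t\<bar> \<partial>lborel) \<le> ennreal (a / F a) * Ch u"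
proof -
  have "(\<integral>\<^sup>+t\<in>E. ennreal \<bar>u t\<bar> \<partial>lborel) = (\<integral>\<^sup>+l. indicator {0<..} l *
      emeasure lborel {t\<in>space lborel. ennreal l < ennreal \<bar>u t\<bar> * indicator E t} \<partial>lborel)"
    by (rule layer_cake) (auto simp: lborel.sigma_finite_measure_axioms)
  also have "\<dots> \<le> (\<integral>\<^sup>+l. ennreal (a / F a) * (indicator {0<..} l * Phi (distf u l)) \<partial>lborel)"
  proof (intro nn_integral_mono)
    fix l :: real
    show "indicator {0<..} l * emeasure lborel {t\<in>space lborel. ennreal l < ennreal \<bar>u t\<bar> * indicator E t}
        \<le> ennreal (a / F a) * (indicator {0<..} l * Phi (distf u l))"
    proof (cases "0 < l")
      case True
      have S: "{t\<in>space lborel. ennreal l < ennreal \<bar>u t\<bar> * indicator E t} = {t\<in>E. l < \<bar>u t\<bar>}"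
        using True by (auto split: split_indicator simp: ennreal_less_iff)
      have "emeasure lborel {t\<in>E. l < \<bar>u t\<bar>} \<le> emeasure lborel E"
        by (intro emeasure_mono) auto
      moreover have "emeasure lborel {t\<in>E. l < \<bar>u t\<bar>} \<le> distf u l"
        unfolding distf_def using E by (intro emeasure_mono) auto
      ultimately have "emeasure lborel {t\<in>E. l < \<bar>u t\<bar>} \<le> min (ennreal a) (distf u l)"
        using mE by simp
      also have "\<dots> \<le> ennreal (a / F a) * Phi (distf u l)" by (rule min_le_Phi[OF a])
      finally show ?thesis using True S by simp
    qed simp
  qed
  also have "\<dots> = ennreal (a / F a) * Ch u"
    unfolding Ch_def by (rule nn_integral_cmult) measurable
  finally show ?thesis .
qed

lemma ax_int:
  assumes [measurable]: "E \<in> sets borel" and E: "E \<subseteq> {0<..}" and fin: "emeasure lborel E < top"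
  shows "\<exists>C::real. \<forall>f\<in>borel_measurable borel.
            (\<integral>\<^sup>+t\<in>E. ennreal \<bar>f t\<bar> \<partial>lborel) \<le> ennreal C * lorentz_norm \<phi> r f"
proof -
  define a where "a = enn2real (emeasure lborel E)"
  have mE: "emeasure lborel E = ennreal a" unfolding a_def using fin by (simp add: ennreal_enn2real_if less_top)
  show ?thesis
  proof (cases "a = 0")
    case True
    then have "E \<in> null_sets lborel" using mE by (simp add: null_sets_def)
    then have "(\<integral>\<^sup>+t\<in>E. ennreal \<bar>f t\<bar> \<partial>lborel) = 0" for f :: "real \<Rightarrow> real"
      by (rule nn_integral_null_set)
    then show ?thesis by (intro exI[of _ 0]) simp
  next
    case False
    then have a: "0 < a" unfolding a_def using enn2real_nonneg[of "emeasure lborel E"] by linarith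
    define K where "K = a / F a"
    have K: "0 < K" unfolding K_def using a F_pos[OF a] by simp
    show ?thesis
    proof (intro exI[of _ "K + a"] ballI)
      fix f :: "real \<Rightarrow> real" assume f[measurable]: "f \<in> borel_measurable borel"
      consider "lorentz_norm \<phi> r f = top" | "lorentz_norm \<phi> r f = 0"
        | p where "lorentz_norm \<phi> r f = ennreal p" "0 < p"
        by (metis enn_cases ennreal_eq_0_iff not_le order.order_iff_strict)
      then show "(\<integral>\<^sup>+t\<in>E. ennreal \<bar>f t\<bar> \<partial>lborel) \<le> ennreal (K + a) * lorentz_norm \<phi> r f"
      proof cases
        case 1
        then show ?thesis using K a by (simp add: ennreal_mult_top)
      next
        case 2
        then have "AE t in lborel. 0 < t \<longrightarrow> f t = 0" using ax_zero[OF f] by simp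
        then have "(\<integral>\<^sup>+t\<in>E. ennreal \<bar>f t\<bar> \<partial>lborel) = (\<integral>\<^sup>+(t::real). 0 \<partial>lborel)"
          using E by (intro nn_integral_cong_AE) (auto elim!: eventually_mono split: split_indicator)
        then show ?thesis by simp
      next
        case 3
        have Cp: "Ch (\<lambda>t. \<bar>f t\<bar> powr r) = ennreal (p powr r)"
          using Ch_epow[OF f] 3 by simp
        have "(\<integral>\<^sup>+t\<in>E. ennreal \<bar>f t\<bar> \<partial>lborel)
            \<le> (\<integral>\<^sup>+t. ennreal (p powr (1 - r)) * (ennreal \<bar>\<bar>f t\<bar> powr r\<bar> * indicator E t) + ennreal p * indicator E t \<partial>lborel)"
        proof (intro nn_integral_mono)
          fix t
          have "ennreal \<bar>f t\<bar> \<le> ennreal (p powr (1 - r) * \<bar>f t\<bar> powr r + p)"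
            using young_simple[of "\<bar>f t\<bar>" p r] 3 r1 by (intro ennreal_leI) auto
          also have "\<dots> = ennreal (p powr (1 - r)) * ennreal \<bar>\<bar>f t\<bar> powr r\<bar> + ennreal p"
            using 3 by (simp add: ennreal_mult[symmetric] ennreal_plus[symmetric] del: ennreal_plus)
          finally show "ennreal \<bar>f t\<bar> * indicator E t \<le> ennreal (p powr (1 - r)) * (ennreal \<bar>\<bar>f t\<bar> powr r\<bar> * indicator E t) + ennreal p * indicator E t"
            by (auto split: split_indicator)
        qed
        also have "\<dots> = ennreal (p powr (1 - r)) * (\<integral>\<^sup>+t\<in>E. ennreal \<bar>\<bar>f t\<bar> powr r\<bar> \<partial>lborel) + ennreal p * emeasure lborel E"
          by (subst nn_integral_add) (auto simp: nn_integral_cmult)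
        also have "\<dots> \<le> ennreal (p powr (1 - r)) * (ennreal K * ennreal (p powr r)) + ennreal p * ennreal a"
          unfolding mE K_def Cp[symmetric]
          by (intro add_mono mult_left_mono int_E_le_Ch a mE E) auto
        also have "\<dots> = ennreal ((K + a) * p)"
        proof -
          have "p powr (1 - r) * (K * p powr r) + p * a = (K + a) * p"
            using 3 by (simp add: algebra_simps powr_add[symmetric])
          then show ?thesis using 3 K a
            by (simp add: ennreal_mult[symmetric] ennreal_plus[symmetric] del: ennreal_plus)
        qed
        also have "ennreal ((K + a) * p) = ennreal (K + a) * lorentz_norm \<phi> r f"
          using 3 K a by (simp add: ennreal_mult del: ennreal_plus)
        finally show ?thesis .
      qed
    qed
  qed
qed

end

context lorr
begin

abbreviation LL :: "(real \<Rightarrow> real) \<Rightarrow> ennreal" where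
  "LL h \<equiv> (\<integral>\<^sup>+t. epow (rearr h t) r \<partial>stieltjes \<phi>)"

lemma rho_LL: "lorentz_norm \<phi> r h = epow (LL h) (1/r)"
  by (simp add: lorentz_norm_def)

lemma LL_less_top: "lorentz_norm \<phi> r h < top \<longleftrightarrow> LL h < top"
  unfolding rho_LL using r0 by (simp add: epow_less_top_iff)

lemma epow_rearr_meas_nu[measurable]: "(\<lambda>t. epow (rearr h t) r) \<in> borel_measurable (stieltjes \<phi>)"
  unfolding meas_nu_eq using r0 by (intro rearr_epow_measurable) auto

lemma rearr_finite:
  assumes fin: "LL h < top" and t: "0 < t"
  shows "rearr h t < top"
proof (rule ccontr)
  assume "\<not> rearr h t < top"
  then have top: "rearr h t = top" by (metis less_top)
  have "(\<integral>\<^sup>+\<tau>. top * indicator {0<..t} \<tau> \<partial>stieltjes \<phi>) \<le> LL h"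
  proof (intro nn_integral_mono)
    fix \<tau> :: real
    show "top * indicator {0<..t} \<tau> \<le> epow (rearr h \<tau>) r"
    proof (cases "\<tau> \<in> {0<..t}")
      case True
      then have "rearr h t \<le> rearr h \<tau>" by (intro rearr_antimono) auto
      then show ?thesis using True top by (simp add: top_unique)
    qed simp
  qed
  moreover have "(\<integral>\<^sup>+\<tau>. top * indicator {0<..t} \<tau> \<partial>stieltjes \<phi>) = top"
  proof -
    have "emeasure (stieltjes \<phi>) {0<..t} = ennreal (F t)" using t nu_Ioc[of 0 t] by (simp add: F_def)
    moreover have "0 < F t" using F_pos t by simp
    ultimately show ?thesis by (simp add: nn_integral_cmult ennreal_mult_top)
  qed
  ultimately show False using fin by simp
qed

lemma distf_trunc:
  assumes h[measurable]: "h \<in> borel_measurable borel" and fin: "\<And>t. 0 < t \<Longrightarrow> rearr h t < top"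
    and s: "0 < s" and y: "0 \<le> y"
  shows "distf (trunc_rearr h s) y = min (ennreal s) (distf h y)"
proof -
  have "{t\<in>{0<..}. y < \<bar>trunc_rearr h s t\<bar>} = {t. 0 < t \<and> ennreal t < min (ennreal s) (distf h y)}"
  proof (intro set_eqI iffI)
    fix t assume "t \<in> {t\<in>{0<..}. y < \<bar>trunc_rearr h s t\<bar>}"
    then have t: "0 < t" and yt: "y < \<bar>trunc_rearr h s t\<bar>" by auto
    have ts: "t < s"
    proof (rule ccontr)
      assume "\<not> t < s"
      then have "trunc_rearr h s t = 0" by (simp add: trunc_rearr_def)
      then show False using yt y by simp
    qed
    then have "y < enn2real (rearr h t)" using yt t by (simp add: trunc_rearr_def)
    then have "ennreal y < rearr h t"
      using fin[OF t] y by (metis ennreal_enn2real_if ennreal_less_iff less_top)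
    then have "ennreal t < distf h y" using rearr_less_iff[OF h _ y, of t] t by simp
    then show "t \<in> {t. 0 < t \<and> ennreal t < min (ennreal s) (distf h y)}"
      using t ts by (simp add: ennreal_less_iff)
  next
    fix t assume "t \<in> {t. 0 < t \<and> ennreal t < min (ennreal s) (distf h y)}"
    then have t: "0 < t" and ts: "t < s" and td: "ennreal t < distf h y"
      by (auto simp: ennreal_less_iff)
    then have "ennreal y < rearr h t" using rearr_less_iff[OF h _ y, of t] by simp
    then have "y < enn2real (rearr h t)"
      using fin[OF t] y by (metis ennreal_enn2real_if ennreal_less_iff less_top)
    then show "t \<in> {t\<in>{0<..}. y < \<bar>trunc_rearr h s t\<bar>}"
      using t ts by (simp add: trunc_rearr_def)
  qed
  then have "distf (trunc_rearr h s) y = emeasure lborel {t. 0 < t \<and> ennreal t < min (ennreal s) (distf h y)}"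
    by (simp only: distf_def[of "trunc_rearr h s"])
  also have "\<dots> = min (ennreal s) (distf h y)" by (rule lborel_pos_less_enn)
  finally show ?thesis .
qed

lemma rearr_trunc:
  assumes h[measurable]: "h \<in> borel_measurable borel" and fin: "\<And>t. 0 < t \<Longrightarrow> rearr h t < top"
    and s: "0 < s" and t: "0 \<le> t"
  shows "rearr (trunc_rearr h s) t = (if t < s then rearr h t else 0)"
proof (cases "t < s")
  case True
  have "{y. 0 \<le> y \<and> distf (trunc_rearr h s) y \<le> ennreal t} = {y. 0 \<le> y \<and> distf h y \<le> ennreal t}"
    using True t by (auto simp: distf_trunc[OF h fin s] min_le_iff_disj ennreal_le_iff)
  then show ?thesis using True unfolding rearr_def by simp
next
  case False
  have "0 \<in> {y. 0 \<le> y \<and> distf (trunc_rearr h s) y \<le> ennreal t}"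
    using False s t by (auto simp: distf_trunc[OF h fin s] min_le_iff_disj ennreal_le_iff)
  then have "rearr (trunc_rearr h s) t \<le> 0" unfolding rearr_def
    by (metis Inf_lower ennreal_0 imageI)
  then show ?thesis using False by simp
qed

lemma LL_trunc:
  assumes h[measurable]: "h \<in> borel_measurable borel" and fin: "LL h < top" and s: "0 < s"
  shows "LL (trunc_rearr h s) = (\<integral>\<^sup>+t. indicator {0<..<s} t * epow (rearr h t) r \<partial>stieltjes \<phi>)"
proof (rule nn_integral_cong_AE)
  show "AE t in stieltjes \<phi>. epow (rearr (trunc_rearr h s) t) r = indicator {0<..<s} t * epow (rearr h t) r"
    using AE_nu_pos
  proof eventually_elim
    case (elim t)
    then show ?case
      using rearr_trunc[OF h rearr_finite[OF fin] s, of t] r0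
      by (auto split: split_indicator)
  qed
qed

lemma ax_X:
  assumes f[measurable]: "f \<in> borel_measurable borel" and g[measurable]: "g \<in> borel_measurable borel"
    and ff: "lorentz_norm \<phi> r f < top" and gf: "lorentz_norm \<phi> r g < top"
    and np: "NP f g" and le: "lorentz_norm \<phi> r g \<le> lorentz_norm \<phi> r f" and s: "0 < s"
  shows "lorentz_norm \<phi> r (trunc_rearr g s) \<le> lorentz_norm \<phi> r (trunc_rearr f s)"
proof -
  have Lf: "LL f < top" and Lg: "LL g < top" using ff gf LL_less_top by auto
  have Lle: "LL g \<le> LL f" using le unfolding rho_LL using r0 epow_le_epow_iff[of "1/r"] by simp
  obtain t0 where t0: "0 < t0" "\<And>t. 0 < t \<and> t \<le> t0 \<Longrightarrow> rearr g t \<le> rearr f t"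
    "\<And>t. t0 \<le> t \<Longrightarrow> rearr f t \<le> rearr g t"
    using np unfolding NP_def by blast
  define G where "G t = epow (rearr g t) r" for t
  define Fr where "Fr t = epow (rearr f t) r" for t
  have [measurable]: "G \<in> borel_measurable (stieltjes \<phi>)" "Fr \<in> borel_measurable (stieltjes \<phi>)"
    unfolding G_def Fr_def by measurable
  have "(\<integral>\<^sup>+t. indicator {0<..<s} t * G t \<partial>stieltjes \<phi>) \<le> (\<integral>\<^sup>+t. indicator {0<..<s} t * Fr t \<partial>stieltjes \<phi>)"
  proof (cases "s \<le> t0")
    case True
    show ?thesis
    proof (intro nn_integral_mono)
      fix t :: real
      show "indicator {0<..<s} t * G t \<le> indicator {0<..<s} t * Fr t"
        using True t0(2)[of t] r0 unfolding G_def Fr_def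
        by (auto split: split_indicator intro: epow_mono)
    qed
  next
    case False
    then have st0: "t0 < s" by simp
    have split: "(\<integral>\<^sup>+t. H t \<partial>stieltjes \<phi>) = (\<integral>\<^sup>+t. indicator {0<..<s} t * H t \<partial>stieltjes \<phi>) + (\<integral>\<^sup>+t. indicator {s..} t * H t \<partial>stieltjes \<phi>)"
      if [measurable]: "H \<in> borel_measurable (stieltjes \<phi>)" for H
    proof -
      have "(\<integral>\<^sup>+t. H t \<partial>stieltjes \<phi>) = (\<integral>\<^sup>+t. indicator {0<..<s} t * H t + indicator {s..} t * H t \<partial>stieltjes \<phi>)"
        using AE_nu_pos by (intro nn_integral_cong_AE) (auto elim!: eventually_mono split: split_indicator)
      also have "\<dots> = (\<integral>\<^sup>+t. indicator {0<..<s} t * H t \<partial>stieltjes \<phi>) + (\<integral>\<^sup>+t. indicator {s..} t * H t \<partial>stieltjes \<phi>)"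
        by (rule nn_integral_add) measurable
      finally show ?thesis .
    qed
    have tail: "(\<integral>\<^sup>+t. indicator {s..} t * Fr t \<partial>stieltjes \<phi>) \<le> (\<integral>\<^sup>+t. indicator {s..} t * G t \<partial>stieltjes \<phi>)"
    proof (intro nn_integral_mono)
      fix t :: real
      show "indicator {s..} t * Fr t \<le> indicator {s..} t * G t"
        using st0 t0(3)[of t] r0 unfolding G_def Fr_def
        by (auto split: split_indicator intro: epow_mono)
    qed
    define Xg where "Xg = (\<integral>\<^sup>+t. indicator {0<..<s} t * G t \<partial>stieltjes \<phi>)"
    define Xf where "Xf = (\<integral>\<^sup>+t. indicator {0<..<s} t * Fr t \<partial>stieltjes \<phi>)"
    define Yg where "Yg = (\<integral>\<^sup>+t. indicator {s..} t * G t \<partial>stieltjes \<phi>)"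
    define Yf where "Yf = (\<integral>\<^sup>+t. indicator {s..} t * Fr t \<partial>stieltjes \<phi>)"
    have eg: "LL g = Xg + Yg" unfolding Xg_def Yg_def G_def[symmetric] by (rule split) measurable
    have ef: "LL f = Xf + Yf" unfolding Xf_def Yf_def Fr_def[symmetric] by (rule split) measurable
    have "Yg + Xg \<le> Yg + Xf"
    proof -
      have "Xg + Yg \<le> Xf + Yf" using Lle eg ef by simp
      also have "\<dots> \<le> Xf + Yg" using tail unfolding Yf_def Yg_def by (rule add_left_mono)
      finally show ?thesis by (simp add: add_ac)
    qed
    moreover have "Yg \<noteq> \<infinity>"
    proof -
      have "Yg \<le> LL g" unfolding eg by simp
      then have "Yg < top" using Lg by (rule le_less_trans)
      then show ?thesis by simp
    qed
    ultimately show ?thesis unfolding Xg_def Xf_def ennreal_add_left_cancel_le by simp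
  qed
  then show ?thesis
    unfolding rho_LL LL_trunc[OF g Lg s] LL_trunc[OF f Lf s] G_def Fr_def
    using r0 by (intro epow_mono) auto
qed

end

context lorr
begin

lemma lorr_in_class_X: "in_class_X (lorentz_norm \<phi> r)"
  unfolding in_class_X_def ri_space_def measurable_lborel2
proof (intro conjI ballI allI impI)
  fix f :: "real \<Rightarrow> real" assume "f \<in> borel_measurable borel"
  then show "(lorentz_norm \<phi> r f = 0) = (AE t in lborel. 0 < t \<longrightarrow> f t = 0)" by (rule ax_zero)
next
  fix f :: "real \<Rightarrow> real" and c :: real assume "f \<in> borel_measurable borel"
  then show "lorentz_norm \<phi> r (\<lambda>t. c * f t) = ennreal \<bar>c\<bar> * lorentz_norm \<phi> r f" by (rule ax_hom)
next
  fix f g :: "real \<Rightarrow> real" assume "f \<in> borel_measurable borel" "g \<in> borel_measurable borel"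
  then show "lorentz_norm \<phi> r (\<lambda>t. f t + g t) \<le> lorentz_norm \<phi> r f + lorentz_norm \<phi> r g" by (rule ax_tri)
next
  fix f g :: "real \<Rightarrow> real" assume "f \<in> borel_measurable borel" "g \<in> borel_measurable borel"
    "AE t in lborel. 0 < t \<longrightarrow> \<bar>g t\<bar> \<le> \<bar>f t\<bar>"
  then show "lorentz_norm \<phi> r g \<le> lorentz_norm \<phi> r f" by (rule ax_lattice)
next
  fix U :: "nat \<Rightarrow> real \<Rightarrow> real" and f :: "real \<Rightarrow> real"
  assume "(\<forall>n. U n \<in> borel_measurable borel) \<and> f \<in> borel_measurable borel \<and>
     (AE t in lborel. 0 < t \<longrightarrow> incseq (\<lambda>n. \<bar>U n t\<bar>) \<and> (\<lambda>n. \<bar>U n t\<bar>) \<longlonglongrightarrow> \<bar>f t\<bar>)"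
  then show "(\<lambda>n. lorentz_norm \<phi> r (U n)) \<longlonglongrightarrow> lorentz_norm \<phi> r f"
    by (intro ax_fatou) auto
next
  fix E :: "real set" assume "E \<in> sets lborel" "E \<subseteq> {0<..} \<and> emeasure lborel E < top"
  then show "lorentz_norm \<phi> r (indicator E) < top" by (intro ax_ind) auto
next
  fix E :: "real set" assume "E \<in> sets lborel" "E \<subseteq> {0<..} \<and> emeasure lborel E < top"
  then show "\<exists>C. \<forall>f\<in>borel_measurable borel. (\<integral>\<^sup>+t\<in>E. ennreal \<bar>f t\<bar> \<partial>lborel) \<le> ennreal C * lorentz_norm \<phi> r f"
    by (intro ax_int) auto
next
  fix f g :: "real \<Rightarrow> real" assume "(\<forall>y\<ge>0. distf f y = distf g y)"
  then show "lorentz_norm \<phi> r f = lorentz_norm \<phi> r g" by (intro ax_ri) auto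
next
  fix f g :: "real \<Rightarrow> real" and s :: real
  assume "f \<in> borel_measurable borel" "g \<in> borel_measurable borel"
    "lorentz_norm \<phi> r f < top \<and> lorentz_norm \<phi> r g < top \<and> NP f g \<and> lorentz_norm \<phi> r g \<le> lorentz_norm \<phi> r f"
    "0 < s"
  then show "lorentz_norm \<phi> r (trunc_rearr g s) \<le> lorentz_norm \<phi> r (trunc_rearr f s)"
    by (intro ax_X) auto
qed

end

lemma powr_concave:
  assumes "0 < a" "a \<le> 1"
  shows "concave_on {0<..} (\<lambda>x::real. x powr a)"
proof (rule f''_le0_imp_concave)
  fix x :: real assume x: "x \<in> {0<..}"
  show "((\<lambda>x. x powr a) has_real_derivative a * x powr (a - 1)) (at x)"
    using x by (auto intro!: derivative_eq_intros)
  show "((\<lambda>x. a * x powr (a - 1)) has_real_derivative a * ((a - 1) * x powr (a - 1 - 1))) (at x)"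
    using x by (auto intro!: derivative_eq_intros)
  show "a * ((a - 1) * x powr (a - 1 - 1)) \<le> 0"
    using assms x by (intro mult_nonneg_nonpos mult_nonpos_nonneg) auto
qed auto

lemma lor_powr:
  assumes a: "0 < a" "a \<le> 1"
  shows "lor (\<lambda>t::real. t powr a)"
proof
  show "strict_mono_on {0..} (\<lambda>t::real. t powr a)"
    using a by (intro strict_mono_onI powr_less_mono2) auto
  show "((\<lambda>t::real. t powr a) \<longlongrightarrow> 0) (at_right 0)"
  proof -
    have "((\<lambda>t::real. t powr a) \<longlongrightarrow> 0 powr a) (at_right 0)"
      using a by (intro tendsto_powr2 tendsto_ident_at tendsto_const eventually_at_rightI[of 0 1]) auto
    then show ?thesis by simp
  qed
  show "concave_on {0..} (\<lambda>t::real. t powr a)"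
  proof (rule concave_on_linorderI)
    fix t x y :: real assume t: "0 < t" "t < 1" and x: "x \<in> {0..}" and y: "y \<in> {0..}" and xy: "x < y"
    show "(1 - t) * x powr a + t * y powr a \<le> ((1 - t) *\<^sub>R x + t *\<^sub>R y) powr a"
    proof (cases "x = 0")
      case True
      have "t powr 1 \<le> t powr a" using t a by (intro powr_mono') auto
      then have "t * y powr a \<le> t powr a * y powr a" using t by (intro mult_right_mono) auto
      also have "\<dots> = (t * y) powr a" using t y by (simp add: powr_mult)
      finally show ?thesis using True by simp
    next
      case False
      then have "x \<in> {0<..}" "y \<in> {0<..}" using x y xy by auto
      then show ?thesis using concave_onD[OF powr_concave[OF a], of t x y] t by simp
    qed
  qed simp
qed

theorem mainTheorem15:
  fixes \<phi> :: "real \<Rightarrow> real" and r :: real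
  assumes "strict_mono_on {0..} \<phi>"
    and "concave_on {0..} \<phi>"
    and "(\<phi> \<longlongrightarrow> 0) (at_right 0)"
    and "1 \<le> r"
  shows "in_class_X (lorentz_norm \<phi> r)
    \<and> (\<forall>p q::real. 1 < p \<and> 1 \<le> q \<and> q \<le> p \<longrightarrow> in_class_X (Lpq_norm p q))"
proof
  interpret lorr \<phi> r using assms by unfold_locales auto
  show "in_class_X (lorentz_norm \<phi> r)" by (rule lorr_in_class_X)
next
  show "\<forall>p q::real. 1 < p \<and> 1 \<le> q \<and> q \<le> p \<longrightarrow> in_class_X (Lpq_norm p q)"
  proof (intro allI impI)
    fix p q :: real assume pq: "1 < p \<and> 1 \<le> q \<and> q \<le> p"
    then have a: "0 < q / p" "q / p \<le> 1" by auto
    interpret L: lor "\<lambda>t::real. t powr (q / p)" by (rule lor_powr[OF a])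
    interpret lorr "\<lambda>t::real. t powr (q / p)" q using pq by unfold_locales auto
    have "Lpq_norm p q = lorentz_norm (\<lambda>t. t powr (q / p)) q"
      by (simp add: Lpq_norm_def lorentz_norm_def fun_eq_iff)
    then show "in_class_X (Lpq_norm p q)" using lorr_in_class_X by simp
  qed
qed

end
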